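(* Let $Q(s)$ be an $n\times n$ complex matrix-valued function of a real variable $s$ that is analytic (equal to its Taylor series) in a neighbourhood of a point $t$, and write $Q=Q(t)$, $Q^{(k)}=\frac{d^kQ}{ds^k}(t)$. Let $U(s,s_0)$ denote the fundamental solution of $\frac{d}{ds}U(s,s_0)=Q(s)U(s,s_0)$, $U(s_0,s_0)=I$. Let $a_2,a_3,a_4,a_5,a_6$ be arbitrary real numbers, and set $$k_1=a_2-2a_3-\tfrac{1}{12},\quad k_2=\tfrac{1}{24}\big(k_1+\tfrac{1}{30}\big),\quad k_3=\tfrac{k_1}{8},\quad k_4=-\tfrac{1}{12}\big(k_1-\tfrac{1}{60}\big),$$ $$k_5=\tfrac{1}{120}-\tfrac{a_2}{4}+\tfrac{a_3}{2}+2a_2^2-10a_2a_3+12a_3^2+a_4-2a_5 .$$ For $\tau>0$ define $Z=\tau Z_1+\tau^3Z_3+\tau^5Z_5$, where $[A,B]=AB-BA$ and $$Z_1=Q,\qquad Z_3=\tfrac{1}{24}Q^{(2)}+\tfrac{1}{12}\big[Q^{(1)},Q\big]+k_1Q^3,$$ $$Z_5=\tfrac{1}{1920}Q^{(4)}+\tfrac{1}{480}\big[Q^{(3)},Q\big]+\tfrac{1}{480}\big[Q^{(1)},Q^{(2)}\big]+\tfrac{1}{240}\big[[Q,Q^{(1)}],Q^{(1)}\big]+k_2\big[[Q^{(2)},Q],Q\big]+k_3\,QQ^{(2)}Q+k_4\big[Q^3,Q^{(1)}\big]+\tfrac{1}{240}\big[QQ^{(1)}Q,Q\big]+k_5Q^5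 ,$$ and define $$T(Z)=\Big(I+\tfrac12 Z+a_2Z^2+a_3Z^3+a_4Z^4+a_5Z^5+a_6Z^6\Big)\Big(I-\tfrac12 Z+a_2Z^2-a_3Z^3+a_4Z^4-a_5Z^5+a_6Z^6\Big)^{-1}$$ (the two factors commute; the inverse exists for all sufficiently small $\tau$). Then, as $\tau\to 0$, $$U\big(t+\tau/2,\,t-\tau/2\big)=T(Z)+O(\tau^7).$$
   Context: $I$ denotes the $n\times n$ identity matrix. $T(Z)$ is a "generalized Cayley transform" $F(Z)/F(-Z)$ with the real polynomial $F(z)=1+\frac12 z+a_2z^2+a_3z^3+a_4z^4+a_5z^5+a_6z^6$; it serves as the transition matrix of a one-step scheme $\Psi_{n+1}=T\Psi_n$ for the linear system $\frac{d\Psi}{ds}=Q(s)\Psi$. *)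

theory Defs
  imports "HOL-Analysis.Analysis" "HOL-Library.Landau_Symbols"
begin

type_synonym 'n cmat = "complex ^'n ^'n"

fun mpow :: "'n::finite cmat \<Rightarrow> nat \<Rightarrow> 'n cmat" where
  "mpow A 0 = mat 1"
| "mpow A (Suc k) = A ** mpow A k"

definition comm :: "'n::finite cmat \<Rightarrow> 'n cmat \<Rightarrow> 'n cmat" where
  "comm A B = A ** B - B ** A"

fun hderiv :: "nat \<Rightarrow> (real \<Rightarrow> 'a::real_normed_vector) \<Rightarrow> real \<Rightarrow> 'a" where
  "hderiv 0 f = f"
| "hderiv (Suc k) f = (\<lambda>s. vector_derivative (hderiv k f) (at s))"

definition analytic_near :: "(real \<Rightarrow> 'a::real_normed_vector) \<Rightarrow> real \<Rightarrow> real \<Rightarrow> bool" where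
  "analytic_near f t \<delta> \<longleftrightarrow> \<delta> > 0 \<and>
     (\<forall>k s. \<bar>s - t\<bar> < \<delta> \<longrightarrow>
        (hderiv k f has_vector_derivative hderiv (Suc k) f s) (at s)) \<and>
     (\<forall>s. \<bar>s - t\<bar> < \<delta> \<longrightarrow>
        (\<lambda>k. ((s - t) ^ k / fact k) *\<^sub>R hderiv k f t) sums f s)"

definition Fpoly :: "real \<Rightarrow> real \<Rightarrow> real \<Rightarrow> real \<Rightarrow> real \<Rightarrow> 'n::finite cmat \<Rightarrow> 'n cmat" where
  "Fpoly a2 a3 a4 a5 a6 Z = mat 1 + (1/2) *\<^sub>R Z + a2 *\<^sub>R mpow Z 2 + a3 *\<^sub>R mpow Z 3
      + a4 *\<^sub>R mpow Z 4 + a5 *\<^sub>R mpow Z 5 + a6 *\<^sub>R mpow Z 6"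

definition Tcay :: "real \<Rightarrow> real \<Rightarrow> real \<Rightarrow> real \<Rightarrow> real \<Rightarrow> 'n::finite cmat \<Rightarrow> 'n cmat" where
  "Tcay a2 a3 a4 a5 a6 Z = Fpoly a2 a3 a4 a5 a6 Z ** matrix_inv (Fpoly a2 a3 a4 a5 a6 (- Z))"

end

theory Submission
  imports Defs
begin

lemma mm_add_r: "((A::'n::finite cmat) + B) ** C = A ** C + B ** C"
  by (simp add: matrix_matrix_mult_def vec_eq_iff sum.distrib distrib_right)
lemma mm_add_l: "(A::'n::finite cmat) ** (B + C) = A ** B + A ** C"
  by (rule matrix_add_ldistrib)
lemma mm_scaleR_l: "(r *\<^sub>R (A::'n::finite cmat)) ** B = r *\<^sub>R (A ** B)"
  by (simp add: matrix_matrix_mult_def vec_eq_iff scaleR_sum_right)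
lemma mm_scaleR_r: "(A::'n::finite cmat) ** (r *\<^sub>R B) = r *\<^sub>R (A ** B)"
  by (simp add: matrix_matrix_mult_def vec_eq_iff scaleR_sum_right)
lemma mm_0_l: "(0::'n::finite cmat) ** B = 0"
  by (simp add: matrix_matrix_mult_def vec_eq_iff)
lemma mm_0_r: "(A::'n::finite cmat) ** 0 = 0"
  by (simp add: matrix_matrix_mult_def vec_eq_iff)
lemma mm_neg_l: "(- (A::'n::finite cmat)) ** B = - (A ** B)"
  by (simp add: matrix_matrix_mult_def vec_eq_iff sum_negf)
lemma mm_neg_r: "(A::'n::finite cmat) ** (- B) = - (A ** B)"
  by (simp add: matrix_matrix_mult_def vec_eq_iff sum_negf)
lemma mm_diff_l: "(A::'n::finite cmat) ** (B - C) = A ** B - A ** C"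
  by (simp add: matrix_matrix_mult_def vec_eq_iff sum_subtractf right_diff_distrib)
lemma mm_diff_r: "((A::'n::finite cmat) - B) ** C = A ** C - B ** C"
  by (simp add: matrix_matrix_mult_def vec_eq_iff sum_subtractf left_diff_distrib)

type_synonym fterm = "real \<times> nat \<times> nat list"

fun pw :: "(nat \<Rightarrow> 'n::finite cmat) \<Rightarrow> nat list \<Rightarrow> 'n cmat" where
  "pw q [] = mat 1"
| "pw q (i # w) = q i ** pw q w"

lemma pw_append: "pw q (w @ v) = pw q w ** pw q v"
  by (induct w) (simp_all add: matrix_mul_assoc)

definition evt :: "(nat \<Rightarrow> 'n::finite cmat) \<Rightarrow> real \<Rightarrow> fterm \<Rightarrow> 'n cmat" where
  "evt q x tm = (fst tm * x ^ fst (snd tm)) *\<^sub>R pw q (snd (snd tm))"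

definition evs :: "(nat \<Rightarrow> 'n::finite cmat) \<Rightarrow> real \<Rightarrow> fterm list \<Rightarrow> 'n cmat" where
  "evs q x xs = sum_list (map (evt q x) xs)"

lemma evs_Nil[simp]: "evs q x [] = 0" by (simp add: evs_def)
lemma evs_Cons: "evs q x (t # xs) = evt q x t + evs q x xs" by (simp add: evs_def)
lemma evs_append: "evs q x (xs @ ys) = evs q x xs + evs q x ys" by (simp add: evs_def)

definition mulF :: "fterm list \<Rightarrow> fterm list \<Rightarrow> fterm list" where
  "mulF xs ys = concat (map (\<lambda>(c,k,w). map (\<lambda>(d,l,v). (c*d, k+l, w@v)) ys) xs)"

lemma evs_mulF: "evs q x (mulF xs ys) = evs q x xs ** evs q x ys"
proof (induct xs)
  case Nil then show ?case by (simp add: mulF_def mm_0_l)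
next
  case (Cons t xs)
  obtain c k w where t: "t = (c,k,w)" by (cases t) auto
  have "evs q x (map (\<lambda>(d,l,v). (c*d, k+l, w@v)) ys) = evt q x t ** evs q x ys"
  proof (induct ys)
    case Nil then show ?case by (simp add: mm_0_r)
  next
    case (Cons s ys)
    obtain d l v where s: "s = (d,l,v)" by (cases s) auto
    show ?case using Cons
      by (simp add: s t evs_Cons evt_def mm_add_l mm_scaleR_l mm_scaleR_r pw_append power_add
          algebra_simps)
  qed
  then show ?case using Cons
    by (simp add: mulF_def evs_append evs_Cons mm_add_r t)
qed

fun insT :: "fterm \<Rightarrow> fterm list \<Rightarrow> fterm list" where
  "insT t [] = [t]"
| "insT t (s # r) = (if snd t = snd s then (fst t + fst s, snd s) # r else s # insT t r)"

fun nrm :: "fterm list \<Rightarrow> fterm list" where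
  "nrm [] = []"
| "nrm (t # xs) = insT t (nrm xs)"

lemma evt_add: "snd t = snd s \<Longrightarrow> evt q x (fst t + fst s, snd s) = evt q x t + evt q x s"
  by (simp add: evt_def algebra_simps)

lemma evs_insT: "evs q x (insT t r) = evt q x t + evs q x r"
  by (cases t, induct r) (auto simp: evs_Cons evt_def algebra_simps)

lemma evs_nrm: "evs q x (nrm xs) = evs q x xs"
  by (induct xs) (simp_all add: evs_insT evs_Cons)

lemma evs_allzero: "list_all (\<lambda>t. fst t = 0) xs \<Longrightarrow> evs q x xs = 0"
  by (induct xs) (auto simp: evs_Cons evt_def)

lemma evs_zeroI: "list_all (\<lambda>t. fst t = 0) (nrm xs) \<Longrightarrow> evs q x xs = 0"
  using evs_allzero evs_nrm by metis

definition negF :: "fterm list \<Rightarrow> fterm list" where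
  "negF xs = map (\<lambda>(c,k,w). (-c,k,w)) xs"
definition scF :: "real \<Rightarrow> fterm list \<Rightarrow> fterm list" where
  "scF r xs = map (\<lambda>(c,k,w). (r*c,k,w)) xs"
definition tpF :: "nat \<Rightarrow> fterm list \<Rightarrow> fterm list" where
  "tpF j xs = map (\<lambda>(c,k,w). (c,k+j,w)) xs"
definition sbF :: "real \<Rightarrow> fterm list \<Rightarrow> fterm list" where
  "sbF r xs = map (\<lambda>(c,k,w). (c * r^k,k,w)) xs"
definition letF :: "nat \<Rightarrow> fterm list" where "letF i = [(1,0,[i])]"
definition oneF :: "fterm list" where "oneF = [(1,0,[])]"
definition commF :: "fterm list \<Rightarrow> fterm list \<Rightarrow> fterm list" where
  "commF xs ys = mulF xs ys @ negF (mulF ys xs)"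
fun mpowF :: "nat \<Rightarrow> fterm list \<Rightarrow> fterm list" where
  "mpowF 0 xs = oneF"
| "mpowF (Suc k) xs = mulF xs (mpowF k xs)"

definition mulT :: "nat \<Rightarrow> fterm list \<Rightarrow> fterm list \<Rightarrow> fterm list" where
  "mulT N xs ys = concat (map (\<lambda>(c,k,w). map (\<lambda>(d,l,v). (c*d, k+l, w@v))
       (filter (\<lambda>(d,l,v). k+l \<le> N) ys)) xs)"
fun powT :: "nat \<Rightarrow> nat \<Rightarrow> fterm list \<Rightarrow> fterm list" where
  "powT N 0 xs = oneF"
| "powT N (Suc k) xs = nrm (mulT N xs (powT N k xs))"

definition FpolyF :: "real \<Rightarrow> real \<Rightarrow> real \<Rightarrow> real \<Rightarrow> real \<Rightarrow> fterm list \<Rightarrow> fterm list" where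
  "FpolyF a2 a3 a4 a5 a6 xs = nrm (oneF @ scF (1/2) xs @ scF a2 (powT 6 2 xs) @ scF a3 (powT 6 3 xs)
     @ scF a4 (powT 6 4 xs) @ scF a5 (powT 6 5 xs) @ scF a6 (powT 6 6 xs))"

definition qtl :: "nat \<Rightarrow> fterm list" where "qtl k = [(1 / fact k, k, [k])]"

fun vc :: "nat \<Rightarrow> fterm list" where
  "vc 0 = oneF"
| "vc (Suc m) = tpF 1 (scF (1 / real (Suc m)) (concat (map (\<lambda>k. mulF (qtl k) (vc (m - k))) [0..<Suc m])))"

definition vpl :: "fterm list" where "vpl = concat (map vc [0..<7])"

definition Z3F :: "real \<Rightarrow> fterm list" where
  "Z3F k1 = scF (1/24) (letF 2) @ scF (1/12) (commF (letF 1) (letF 0)) @ scF k1 (mpowF 3 (letF 0))"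
definition Z5F :: "real \<Rightarrow> real \<Rightarrow> real \<Rightarrow> real \<Rightarrow> real \<Rightarrow> fterm list" where
  "Z5F k1 k2 k3 k4 k5 = scF (1/1920) (letF 4) @ scF (1/480) (commF (letF 3) (letF 0))
     @ scF (1/480) (commF (letF 1) (letF 2)) @ scF (1/240) (commF (commF (letF 0) (letF 1)) (letF 1))
     @ scF k2 (commF (commF (letF 2) (letF 0)) (letF 0)) @ scF k3 (mulF (mulF (letF 0) (letF 2)) (letF 0))
     @ scF k4 (commF (mpowF 3 (letF 0)) (letF 1)) @ scF (1/240) (commF (mulF (mulF (letF 0) (letF 1)) (letF 0)) (letF 0))
     @ scF k5 (mpowF 5 (letF 0))"
definition ZF where
  "ZF k1 k2 k3 k4 k5 = nrm (tpF 1 (letF 0) @ tpF 3 (Z3F k1) @ tpF 5 (Z5F k1 k2 k3 k4 k5))"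

lemma mpowF_numeral[simp]: "mpowF (numeral n) xs = mulF xs (mpowF (pred_numeral n) xs)"
  by (simp add: numeral_eq_Suc)
lemma powT_numeral[simp]: "powT N (numeral n) xs = nrm (mulT N xs (powT N (pred_numeral n) xs))"
  by (simp add: numeral_eq_Suc)
lemma vc_numeral[simp]: "vc (numeral n) = tpF 1 (scF (1 / real (numeral n)) (concat (map (\<lambda>k. mulF (qtl k) (vc (pred_numeral n - k))) [0..<numeral n])))"
  by (simp add: numeral_eq_Suc)

definition GF where
  "GF a2 a3 a4 a5 a6 k1 k2 k3 k4 k5 =
     mulT 6 (FpolyF a2 a3 a4 a5 a6 (negF (ZF k1 k2 k3 k4 k5))) (sbF (1/2) vpl)
     @ negF (mulT 6 (FpolyF a2 a3 a4 a5 a6 (ZF k1 k2 k3 k4 k5)) (sbF (-1/2) vpl))"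

lemma le_helpers: "((0::nat) \<le> n) = True" "(Suc m \<le> 0) = False" "(Suc m \<le> Suc n) = (m \<le> n)"
  by auto

lemma upt7: "[0..<7] = [0,1,2,3,4,5,6::nat]" by (simp add: upt_rec)

lemmas evsimps = mulT_def mulF_def negF_def scF_def tpF_def sbF_def letF_def oneF_def commF_def
     qtl_def nrm.simps list.map concat.simps append.simps filter.simps foldr.simps o_apply insT.simps
     prod.case fst_conv snd_conv prod.inject eval_nat_numeral BitM.simps numeral_One
     add_Suc add_0 le_helpers nat.inject nat.distinct list.inject list.distinct
     if_True if_False simp_thms mpowF.simps powT.simps One_nat_def id_apply add_0_right

definition Zl :: "real \<Rightarrow> real \<Rightarrow> real \<Rightarrow> real \<Rightarrow> real \<Rightarrow> fterm list" where
  "Zl k1 k2 k3 k4 k5 = [(k5, 5, [0, 0, 0, 0, 0]), (- (1 / 240), 5, [0, 0, Suc 0, 0]), (1 / 240, 5, [0, Suc 0, 0, 0]), (- k4, 5, [Suc 0, 0, 0, 0]), (k4, 5, [0, 0, 0, Suc 0]), (k3 - 2 * k2, 5, [0, 2, 0]), (k2, 5, [0, 0, 2]), (k2, 5, [2, 0, 0]), (1 / 240, 5, [Suc 0, Suc 0, 0]), (- (1 / 120), 5, [Suc 0, 0, Suc 0]), (1 / 240, 5, [0, Suc 0, Suc 0]), (- (1 / 480), 5, [2, Suc 0]), (1 / 480, 5, [Suc 0, 2]), (- (1 / 480), 5, [0, 3]), (1 / 480, 5, [3, 0]), (1 / 1920, 5, [4]), (k1, 3, [0, 0, 0]), (- (1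 / 12), 3, [0, Suc 0]), (1 / 12, 3, [Suc 0, 0]), (1 / 24, 3, [2]), (1, Suc 0, [0])]"

lemma Zl_eq: "ZF k1 k2 k3 k4 k5 = Zl k1 k2 k3 k4 k5"
  unfolding ZF_def Z3F_def Z5F_def
  by (simp add: mulT_def mulF_def negF_def scF_def tpF_def sbF_def letF_def oneF_def commF_def qtl_def Zl_def)

definition Z2l :: "real \<Rightarrow> real \<Rightarrow> real \<Rightarrow> real \<Rightarrow> real \<Rightarrow> fterm list" where
  "Z2l k1 k2 k3 k4 k5 = [(1, Suc (Suc 0), [0, 0]), (1 / 24, 4, [0, 2]), (0, 4, [0, Suc 0, 0]), (- (1 / 12), 4, [0, 0, Suc 0]), (2 * k1, 4, [0, 0, 0, 0]), (1 / 1920, 6, [0, 4]), (0, 6, [0, 3, 0]), (- (1 / 480), 6, [0, 0, 3]), (- (1 / 720), 6, [0, Suc 0, 2]), (- (1 / 480), 6, [0, 2, Suc 0]), (1 / 240, 6, [0, 0, Suc 0, Suc 0]), (- (1 / 720), 6, [0, Suc 0, 0, Suc 0]), (1 / 720, 6, [0, Suc 0, Suc 0, 0]), (k3 - k2, 6, [0, 2, 0, 0]), (k1 / 24 + k2, 6, [0, 0, 0, 2]), (k3 - k2, 6, [0, 0, 2, 0]), (k4 - k1 / 12, 6, [0, 0, 0, 0, Suc 0]), (1 / 240 + (- (k1 / 12) - k4), 6, [0, Suc 0, 0, 0, 0]), (0, 6, [0, 0, Suc 0, 0, 0]), (k4 + (k1 / 12 - 1 / 240), 6, [0, 0, 0,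 Suc 0, 0]), (2 * k5 + k1 * k1, 6, [0, 0, 0, 0, 0, 0]), (1 / 24, 4, [2, 0]), (1 / 576, 6, [2, 2]), (1 / 720, 6, [2, Suc 0, 0]), (- (1 / 288), 6, [2, 0, Suc 0]), (k2 + k1 / 24, 6, [2, 0, 0, 0]), (1 / 12, 4, [Suc 0, 0, 0]), (1 / 288, 6, [Suc 0, 0, 2]), (- (1 / 720), 6, [Suc 0, 0, Suc 0, 0]), (- (1 / 144), 6, [Suc 0, 0, 0, Suc 0]), (k1 / 12 - k4, 6, [Suc 0, 0, 0, 0, 0]), (1 / 1920, 6, [4, 0]), (1 / 480, 6, [3, 0, 0]), (1 / 480, 6, [Suc 0, 2, 0]), (1 / 240, 6, [Suc 0, Suc 0, 0, 0])]"

lemma Z2l_eq: "nrm (mulT 6 (Zl k1 k2 k3 k4 k5) (Zl k1 k2 k3 k4 k5)) = Z2l k1 k2 k3 k4 k5"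
  unfolding Zl_def
  by (simp add: mulT_def mulF_def negF_def scF_def tpF_def sbF_def letF_def oneF_def commF_def qtl_def Z2l_def)

definition Z3l :: "real \<Rightarrow> real \<Rightarrow> real \<Rightarrow> real \<Rightarrow> real \<Rightarrow> fterm list" where
  "Z3l k1 k2 k3 k4 k5 = [(0, 5, [0, Suc 0, 0, 0]), (1 / 24, 5, [0, 2, 0]), (3 * k1, 5, [0, 0, 0, 0, 0]), (- (1 / 12), 5, [0, 0, 0, Suc 0]), (0, 5, [0, 0, Suc 0, 0]), (1 / 24, 5, [0, 0, 2]), (1, Suc (Suc (Suc 0)), [0, 0, 0]), (1 / 24, 5, [2, 0, 0]), (1 / 12, 5, [Suc 0, 0, 0, 0])]"

lemma Z3l_eq: "nrm (mulT 6 (Zl k1 k2 k3 k4 k5) (Z2l k1 k2 k3 k4 k5)) = Z3l k1 k2 k3 k4 k5"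
  unfolding Zl_def Z2l_def
  by (simp add: mulT_def mulF_def negF_def scF_def tpF_def sbF_def letF_def oneF_def commF_def qtl_def Z3l_def)

definition Z4l :: "real \<Rightarrow> real \<Rightarrow> real \<Rightarrow> real \<Rightarrow> real \<Rightarrow> fterm list" where
  "Z4l k1 k2 k3 k4 k5 = [(0, 6, [0, Suc 0, 0, 0, 0]), (1 / 24, 6, [0, 2, 0, 0]), (1, Suc (Suc (Suc (Suc 0))), [0, 0, 0, 0]), (1 / 24, 6, [0, 0, 0, 2]), (0, 6, [0, 0, 0, Suc 0, 0]), (- (1 / 12), 6, [0, 0, 0, 0, Suc 0]), (4 * k1, 6, [0, 0, 0, 0, 0, 0]), (1 / 24, 6, [0, 0, 2, 0]), (0, 6, [0, 0, Suc 0, 0, 0]), (1 / 24, 6, [2, 0, 0, 0]), (1 / 12, 6, [Suc 0, 0, 0, 0, 0])]"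

lemma Z4l_eq: "nrm (mulT 6 (Zl k1 k2 k3 k4 k5) (Z3l k1 k2 k3 k4 k5)) = Z4l k1 k2 k3 k4 k5"
  unfolding Zl_def Z3l_def
  by (simp add: mulT_def mulF_def negF_def scF_def tpF_def sbF_def letF_def oneF_def commF_def qtl_def Z4l_def)

definition Z5l :: "real \<Rightarrow> real \<Rightarrow> real \<Rightarrow> real \<Rightarrow> real \<Rightarrow> fterm list" where
  "Z5l k1 k2 k3 k4 k5 = [(1, Suc (Suc (Suc (Suc (Suc 0)))), [0, 0, 0, 0, 0])]"

lemma Z5l_eq: "nrm (mulT 6 (Zl k1 k2 k3 k4 k5) (Z4l k1 k2 k3 k4 k5)) = Z5l k1 k2 k3 k4 k5"
  unfolding Zl_def Z4l_def
  by (simp add: mulT_def mulF_def negF_def scF_def tpF_def sbF_def letF_def oneF_def commF_def qtl_def Z5l_def)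

definition Z6l :: "real \<Rightarrow> real \<Rightarrow> real \<Rightarrow> real \<Rightarrow> real \<Rightarrow> fterm list" where
  "Z6l k1 k2 k3 k4 k5 = [(1, Suc (Suc (Suc (Suc (Suc (Suc 0))))), [0, 0, 0, 0, 0, 0])]"

lemma Z6l_eq: "nrm (mulT 6 (Zl k1 k2 k3 k4 k5) (Z5l k1 k2 k3 k4 k5)) = Z6l k1 k2 k3 k4 k5"
  unfolding Zl_def Z5l_def
  by (simp add: mulT_def mulF_def negF_def scF_def tpF_def sbF_def letF_def oneF_def commF_def qtl_def Z6l_def)

definition Fml :: "real \<Rightarrow> real \<Rightarrow> real \<Rightarrow> real \<Rightarrow> real \<Rightarrow> real \<Rightarrow> real \<Rightarrow> real \<Rightarrow> real \<Rightarrow> real \<Rightarrow> fterm list" where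
  "Fml a2 a3 a4 a5 a6 k1 k2 k3 k4 k5 = [(a2 * (2 * k5 + k1 * k1) + (a4 * (4 * k1) + a6), Suc (Suc (Suc (Suc (Suc (Suc 0))))), [0, 0, 0, 0, 0, 0]), (- (a3 * (3 * k1)) - a5 - k5 / 2, Suc (Suc (Suc (Suc (Suc 0)))), [0, 0, 0, 0, 0]), (a2 * (k1 / 12 - k4) + a4 / 12, 6, [Suc 0, 0, 0, 0, 0]), (a2 * (k2 + k1 / 24) + a4 / 24, 6, [2, 0, 0, 0]), (0, 6, [0, 0, Suc 0, 0, 0]), (a2 * (k3 - k2) + a4 / 24, 6, [0, 0, 2, 0]), (a2 * (k4 - k1 / 12) - a4 / 12, 6, [0, 0, 0, 0, Suc 0]), (a2 * (k4 + (k1 / 12 - 1 / 240)), 6, [0, 0, 0, Suc 0, 0]), (a2 * (k1 / 24 + k2) + a4 / 24, 6, [0, 0, 0, 2]), (a2 * (2 * k1) + a4, Suc (Suc (Suc (Suc 0))), [0, 0, 0, 0]), (a2 * (k3 - k2) + a4 / 24, 6, [0, 2, 0, 0]), (a2 * (1 / 240 + (- (k1 / 12) - k4)), 6, [0, Suc 0, 0, 0, 0]), (k4 / 2 - a3 / 12, 5, [Suc 0, 0, 0, 0]), (- (k2 / 2) - a3 / 24, 5, [2, 0, 0]), (- (k1 / 2) - a3, Suc (Suc (Suc 0)), [0, 0, 0]), (- (k2 / 2) - a3 / 24, 5, [0, 0, 2]), (1 / 480, 5, [0, 0, Suc 0, 0]), (a3 / 12 - k4 / 2, 5, [0, 0,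 0, Suc 0]), (- ((k3 - 2 * k2) / 2) - a3 / 24, 5, [0, 2, 0]), (- (1 / 480), 5, [0, Suc 0, 0, 0]), (a2 / 240, 6, [Suc 0, Suc 0, 0, 0]), (a2 / 480, 6, [Suc 0, 2, 0]), (a2 / 480, 6, [3, 0, 0]), (a2 / 1920, 6, [4, 0]), (- (a2 / 144), 6, [Suc 0, 0, 0, Suc 0]), (- (a2 / 720), 6, [Suc 0, 0, Suc 0, 0]), (a2 / 288, 6, [Suc 0, 0, 2]), (a2 / 12, 4, [Suc 0, 0, 0]), (- (a2 / 288), 6, [2, 0, Suc 0]), (a2 / 720, 6, [2, Suc 0, 0]), (a2 / 576, 6, [2, 2]), (a2 / 24, 4, [2, 0]), (a2 / 720, 6, [0, Suc 0, Suc 0, 0]), (- (a2 / 720), 6, [0, Suc 0, 0, Suc 0]), (a2 / 240, 6, [0, 0, Suc 0, Suc 0]), (- (a2 / 480), 6, [0, 2, Suc 0]), (- (a2 / 720), 6, [0, Suc 0, 2]), (- (a2 / 480), 6, [0, 0, 3]), (0, 6, [0, 3, 0]), (a2 / 1920, 6, [0, 4]), (- (a2 / 12), 4, [0, 0, Suc 0]), (0, 4, [0, Suc 0, 0]), (a2 / 24, 4, [0, 2]), (a2, Suc (Suc 0), [0, 0]), (- (1 / 2), Suc 0, [0]), (- (1 / 48), 3, [2]), (- (1 / 24), 3, [Suc 0, 0]), (1 / 24, 3, [0, Suc 0]), (- (1 / 3840), 5, [4]), (- (1 / 960), 5, [3, 0]), (1 / 960, 5, [0, 3]), (- (1 / 960),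 5, [Suc 0, 2]), (1 / 960, 5, [2, Suc 0]), (- (1 / 480), 5, [0, Suc 0, Suc 0]), (1 / 240, 5, [Suc 0, 0, Suc 0]), (- (1 / 480), 5, [Suc 0, Suc 0, 0]), (1, 0, [])]"

lemma Fml_eq: "nrm (oneF @ scF (-1/2) (Zl k1 k2 k3 k4 k5) @ scF a2 (Z2l k1 k2 k3 k4 k5) @ scF (-a3) (Z3l k1 k2 k3 k4 k5) @ scF a4 (Z4l k1 k2 k3 k4 k5) @ scF (-a5) (Z5l k1 k2 k3 k4 k5) @ scF a6 (Z6l k1 k2 k3 k4 k5)) = Fml a2 a3 a4 a5 a6 k1 k2 k3 k4 k5"
  unfolding Zl_def Z2l_def Z3l_def Z4l_def Z5l_def Z6l_def
  by (simp add: mulT_def mulF_def negF_def scF_def tpF_def sbF_def letF_def oneF_def commF_def qtl_def Fml_def)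

definition Vl :: "fterm list" where
  "Vl  = [(1, 0, []), (1, Suc 0, [0]), (1 / 2, Suc (Suc 0), [0, 0]), (1 / 2, Suc (Suc 0), [Suc 0]), (1 / 6, Suc (Suc (Suc 0)), [0, 0, 0]), (1 / 6, Suc (Suc (Suc 0)), [0, Suc 0]), (1 / 3, Suc (Suc (Suc 0)), [Suc 0, 0]), (1 / 6, Suc (Suc (Suc 0)), [Suc (Suc 0)]), (1 / 24, Suc (Suc (Suc (Suc 0))), [0, 0, 0, 0]), (1 / 24, Suc (Suc (Suc (Suc 0))), [0, 0, Suc 0]), (1 / 12, Suc (Suc (Suc (Suc 0))), [0, Suc 0, 0]), (1 / 24, Suc (Suc (Suc (Suc 0))), [0, Suc (Suc 0)]), (1 / 8, Suc (Suc (Suc (Suc 0))), [Suc 0, 0, 0]), (1 / 8, Suc (Suc (Suc (Suc 0))), [Suc 0, Suc 0]), (1 / 8, Suc (Suc (Suc (Suc 0))), [Suc (Suc 0), 0]), (1 / 24, Suc (Suc (Suc (Suc 0))), [Suc (Suc (Suc 0))]), (1 / 120, Suc (Suc (Suc (Suc (Suc 0)))), [0, 0, 0, 0, 0]), (1 / 120, Suc (Suc (Suc (Suc (Suc 0)))), [0, 0, 0, Suc 0]), (1 / 60, Suc (Suc (Suc (Suc (Suc 0)))), [0, 0, Suc 0, 0]), (1 / 120, Suc (Suc (Suc (Suc (Suc 0)))), [0, 0, Suc (Suc 0)]), (1 / 40, Suc (Suc (Suc (Suc (Suc 0)))), [0, Suc 0, 0, 0]), (1 / 40, Suc (Suc (Suc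 (Suc (Suc 0)))), [0, Suc 0, Suc 0]), (1 / 40, Suc (Suc (Suc (Suc (Suc 0)))), [0, Suc (Suc 0), 0]), (1 / 120, Suc (Suc (Suc (Suc (Suc 0)))), [0, Suc (Suc (Suc 0))]), (1 / 30, Suc (Suc (Suc (Suc (Suc 0)))), [Suc 0, 0, 0, 0]), (1 / 30, Suc (Suc (Suc (Suc (Suc 0)))), [Suc 0, 0, Suc 0]), (1 / 15, Suc (Suc (Suc (Suc (Suc 0)))), [Suc 0, Suc 0, 0]), (1 / 30, Suc (Suc (Suc (Suc (Suc 0)))), [Suc 0, Suc (Suc 0)]), (1 / 20, Suc (Suc (Suc (Suc (Suc 0)))), [Suc (Suc 0), 0, 0]), (1 / 20, Suc (Suc (Suc (Suc (Suc 0)))), [Suc (Suc 0), Suc 0]), (1 / 30, Suc (Suc (Suc (Suc (Suc 0)))), [Suc (Suc (Suc 0)), 0]), (1 / 120, Suc (Suc (Suc (Suc (Suc 0)))), [Suc (Suc (Suc (Suc 0)))]), (1 / 720, Suc (Suc (Suc (Suc (Suc (Suc 0))))), [0, 0, 0, 0, 0, 0]), (1 / 720, Suc (Suc (Suc (Suc (Suc (Suc 0))))), [0, 0, 0, 0, Suc 0]), (1 / 360, Suc (Suc (Suc (Suc (Suc (Suc 0))))), [0, 0, 0, Suc 0, 0]), (1 / 720, Suc (Suc (Suc (Suc (Suc (Suc 0))))), [0, 0, 0, Suc (Suc 0)]), (1 / 240, Suc (Suc (Suc (Suc (Suc (Suc 0))))), [0, 0, Suc 0, 0, 0]), (1 /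 240, Suc (Suc (Suc (Suc (Suc (Suc 0))))), [0, 0, Suc 0, Suc 0]), (1 / 240, Suc (Suc (Suc (Suc (Suc (Suc 0))))), [0, 0, Suc (Suc 0), 0]), (1 / 720, Suc (Suc (Suc (Suc (Suc (Suc 0))))), [0, 0, Suc (Suc (Suc 0))]), (1 / 180, Suc (Suc (Suc (Suc (Suc (Suc 0))))), [0, Suc 0, 0, 0, 0]), (1 / 180, Suc (Suc (Suc (Suc (Suc (Suc 0))))), [0, Suc 0, 0, Suc 0]), (1 / 90, Suc (Suc (Suc (Suc (Suc (Suc 0))))), [0, Suc 0, Suc 0, 0]), (1 / 180, Suc (Suc (Suc (Suc (Suc (Suc 0))))), [0, Suc 0, Suc (Suc 0)]), (1 / 120, Suc (Suc (Suc (Suc (Suc (Suc 0))))), [0, Suc (Suc 0), 0, 0]), (1 / 120, Suc (Suc (Suc (Suc (Suc (Suc 0))))), [0, Suc (Suc 0), Suc 0]), (1 / 180, Suc (Suc (Suc (Suc (Suc (Suc 0))))), [0, Suc (Suc (Suc 0)), 0]), (1 / 720, Suc (Suc (Suc (Suc (Suc (Suc 0))))), [0, Suc (Suc (Suc (Suc 0)))]), (1 / 144, Suc (Suc (Suc (Suc (Suc (Suc 0))))), [Suc 0, 0, 0, 0, 0]), (1 / 144, Suc (Suc (Suc (Suc (Suc (Suc 0))))), [Suc 0, 0, 0, Suc 0]), (1 / 72, Suc (Suc (Suc (Suc (Suc (Suc 0))))), [Suc 0, 0, Suc 0, 0]), (1 / 144, Suc (Suc (Suc (Suc (Suc (Suc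 0))))), [Suc 0, 0, Suc (Suc 0)]), (1 / 48, Suc (Suc (Suc (Suc (Suc (Suc 0))))), [Suc 0, Suc 0, 0, 0]), (1 / 48, Suc (Suc (Suc (Suc (Suc (Suc 0))))), [Suc 0, Suc 0, Suc 0]), (1 / 48, Suc (Suc (Suc (Suc (Suc (Suc 0))))), [Suc 0, Suc (Suc 0), 0]), (1 / 144, Suc (Suc (Suc (Suc (Suc (Suc 0))))), [Suc 0, Suc (Suc (Suc 0))]), (1 / 72, Suc (Suc (Suc (Suc (Suc (Suc 0))))), [Suc (Suc 0), 0, 0, 0]), (1 / 72, Suc (Suc (Suc (Suc (Suc (Suc 0))))), [Suc (Suc 0), 0, Suc 0]), (1 / 36, Suc (Suc (Suc (Suc (Suc (Suc 0))))), [Suc (Suc 0), Suc 0, 0]), (1 / 72, Suc (Suc (Suc (Suc (Suc (Suc 0))))), [Suc (Suc 0), Suc (Suc 0)]), (1 / 72, Suc (Suc (Suc (Suc (Suc (Suc 0))))), [Suc (Suc (Suc 0)), 0, 0]), (1 / 72, Suc (Suc (Suc (Suc (Suc (Suc 0))))), [Suc (Suc (Suc 0)), Suc 0]), (1 / 144, Suc (Suc (Suc (Suc (Suc (Suc 0))))), [Suc (Suc (Suc (Suc 0))), 0]), (1 / 720, Suc (Suc (Suc (Suc (Suc (Suc 0))))), [Suc (Suc (Suc (Suc (Suc 0))))])]"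

lemma Vl_eq: "vpl = Vl "
  unfolding vpl_def upt7
  by (simp add: mulT_def mulF_def negF_def scF_def tpF_def sbF_def letF_def oneF_def commF_def qtl_def upt_rec Vl_def)

definition Apl :: "fterm list" where
  "Apl  = [(1 / 46080, Suc (Suc (Suc (Suc (Suc (Suc 0))))), [Suc (Suc (Suc (Suc (Suc 0))))]), (1 / 9216, Suc (Suc (Suc (Suc (Suc (Suc 0))))), [Suc (Suc (Suc (Suc 0))), 0]), (1 / 4608, Suc (Suc (Suc (Suc (Suc (Suc 0))))), [Suc (Suc (Suc 0)), Suc 0]), (1 / 4608, Suc (Suc (Suc (Suc (Suc (Suc 0))))), [Suc (Suc (Suc 0)), 0, 0]), (1 / 4608, Suc (Suc (Suc (Suc (Suc (Suc 0))))), [Suc (Suc 0), Suc (Suc 0)]), (1 / 2304, Suc (Suc (Suc (Suc (Suc (Suc 0))))), [Suc (Suc 0), Suc 0, 0]), (1 / 4608, Suc (Suc (Suc (Suc (Suc (Suc 0))))), [Suc (Suc 0), 0, Suc 0]), (1 / 4608, Suc (Suc (Suc (Suc (Suc (Suc 0))))), [Suc (Suc 0), 0, 0, 0]), (1 / 9216, Suc (Suc (Suc (Suc (Suc (Suc 0))))), [Suc 0, Suc (Suc (Suc 0))]), (1 / 3072, Suc (Suc (Suc (Suc (Suc (Suc 0))))), [Suc 0, Suc (Suc 0), 0]), (1 / 3072, Suc (Suc (Suc (Suc (Suc (Suc 0))))), [Suc 0, Suc 0, Suc 0]), (1 / 3072, Suc (Suc (Suc (Suc (Suc (Suc 0))))),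 [Suc 0, Suc 0, 0, 0]), (1 / 9216, Suc (Suc (Suc (Suc (Suc (Suc 0))))), [Suc 0, 0, Suc (Suc 0)]), (1 / 4608, Suc (Suc (Suc (Suc (Suc (Suc 0))))), [Suc 0, 0, Suc 0, 0]), (1 / 9216, Suc (Suc (Suc (Suc (Suc (Suc 0))))), [Suc 0, 0, 0, Suc 0]), (1 / 9216, Suc (Suc (Suc (Suc (Suc (Suc 0))))), [Suc 0, 0, 0, 0, 0]), (1 / 46080, Suc (Suc (Suc (Suc (Suc (Suc 0))))), [0, Suc (Suc (Suc (Suc 0)))]), (1 / 11520, Suc (Suc (Suc (Suc (Suc (Suc 0))))), [0, Suc (Suc (Suc 0)), 0]), (1 / 7680, Suc (Suc (Suc (Suc (Suc (Suc 0))))), [0, Suc (Suc 0), Suc 0]), (1 / 7680, Suc (Suc (Suc (Suc (Suc (Suc 0))))), [0, Suc (Suc 0), 0, 0]), (1 / 11520, Suc (Suc (Suc (Suc (Suc (Suc 0))))), [0, Suc 0, Suc (Suc 0)]), (1 / 5760, Suc (Suc (Suc (Suc (Suc (Suc 0))))), [0, Suc 0, Suc 0, 0]), (1 / 11520, Suc (Suc (Suc (Suc (Suc (Suc 0))))), [0, Suc 0, 0, Suc 0]), (1 / 11520, Suc (Suc (Suc (Suc (Suc (Suc 0))))), [0, Suc 0, 0, 0, 0]), (1 / 46080, Suc (Suc (Suc (Suc (Suc (Suc 0))))), [0, 0, Suc (Suc (Suc 0))]), (1 / 15360, Suc (Suc (Suc (Suc (Suc (Suc 0))))), [0, 0, Suc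 (Suc 0), 0]), (1 / 15360, Suc (Suc (Suc (Suc (Suc (Suc 0))))), [0, 0, Suc 0, Suc 0]), (1 / 15360, Suc (Suc (Suc (Suc (Suc (Suc 0))))), [0, 0, Suc 0, 0, 0]), (1 / 46080, Suc (Suc (Suc (Suc (Suc (Suc 0))))), [0, 0, 0, Suc (Suc 0)]), (1 / 23040, Suc (Suc (Suc (Suc (Suc (Suc 0))))), [0, 0, 0, Suc 0, 0]), (1 / 46080, Suc (Suc (Suc (Suc (Suc (Suc 0))))), [0, 0, 0, 0, Suc 0]), (1 / 46080, Suc (Suc (Suc (Suc (Suc (Suc 0))))), [0, 0, 0, 0, 0, 0]), (1 / 3840, Suc (Suc (Suc (Suc (Suc 0)))), [Suc (Suc (Suc (Suc 0)))]), (1 / 960, Suc (Suc (Suc (Suc (Suc 0)))), [Suc (Suc (Suc 0)), 0]), (1 / 640, Suc (Suc (Suc (Suc (Suc 0)))), [Suc (Suc 0), Suc 0]), (1 / 640, Suc (Suc (Suc (Suc (Suc 0)))), [Suc (Suc 0), 0, 0]), (1 / 960, Suc (Suc (Suc (Suc (Suc 0)))), [Suc 0, Suc (Suc 0)]), (1 / 480, Suc (Suc (Suc (Suc (Suc 0)))), [Suc 0, Suc 0, 0]), (1 / 960, Suc (Suc (Suc (Suc (Suc 0)))), [Suc 0, 0, Suc 0]), (1 / 960, Suc (Suc (Suc (Suc (Suc 0)))), [Suc 0, 0, 0, 0]), (1 / 3840, Suc (Suc (Suc (Suc (Suc 0)))), [0, Suc (Suc (Suc 0))]), (1 / 1280,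 Suc (Suc (Suc (Suc (Suc 0)))), [0, Suc (Suc 0), 0]), (1 / 1280, Suc (Suc (Suc (Suc (Suc 0)))), [0, Suc 0, Suc 0]), (1 / 1280, Suc (Suc (Suc (Suc (Suc 0)))), [0, Suc 0, 0, 0]), (1 / 3840, Suc (Suc (Suc (Suc (Suc 0)))), [0, 0, Suc (Suc 0)]), (1 / 1920, Suc (Suc (Suc (Suc (Suc 0)))), [0, 0, Suc 0, 0]), (1 / 3840, Suc (Suc (Suc (Suc (Suc 0)))), [0, 0, 0, Suc 0]), (1 / 3840, Suc (Suc (Suc (Suc (Suc 0)))), [0, 0, 0, 0, 0]), (1 / 384, Suc (Suc (Suc (Suc 0))), [Suc (Suc (Suc 0))]), (1 / 128, Suc (Suc (Suc (Suc 0))), [Suc (Suc 0), 0]), (1 / 128, Suc (Suc (Suc (Suc 0))), [Suc 0, Suc 0]), (1 / 128, Suc (Suc (Suc (Suc 0))), [Suc 0, 0, 0]), (1 / 384, Suc (Suc (Suc (Suc 0))), [0, Suc (Suc 0)]), (1 / 192, Suc (Suc (Suc (Suc 0))), [0, Suc 0, 0]), (1 / 384, Suc (Suc (Suc (Suc 0))), [0, 0, Suc 0]), (1 / 384, Suc (Suc (Suc (Suc 0))), [0, 0, 0, 0]), (1 / 48, Suc (Suc (Suc 0)), [Suc (Suc 0)]), (1 / 24, Suc (Suc (Suc 0)), [Suc 0, 0]), (1 / 48, Suc (Suc (Suc 0)), [0, Suc 0]), (1 / 48, Suc (Suc (Suc 0)), [0, 0, 0]), (1 / 8, Suc (Suc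 0), [Suc 0]), (1 / 8, Suc (Suc 0), [0, 0]), (1 / 2, Suc 0, [0]), (1, 0, [])]"

lemma Apl_eq: "nrm (sbF (1/2) Vl) = Apl "
  unfolding Vl_def
  by (simp add: mulT_def mulF_def negF_def scF_def tpF_def sbF_def letF_def oneF_def commF_def qtl_def upt_rec Apl_def)


lemma norm_vec_sum: "norm (x :: 'a::real_normed_vector ^ 'n::finite) \<le> (\<Sum>i\<in>UNIV. norm (x $ i))"
  unfolding norm_vec_def by (rule L2_set_le_sum) simp

lemma norm_entry: "norm ((A::'n::finite cmat) $ i $ j) \<le> norm A"
  using Finite_Cartesian_Product.norm_nth_le[of "A $ i" j] Finite_Cartesian_Product.norm_nth_le[of A i] by linarith

lemma norm_mm: "norm ((A::'n::finite cmat) ** (B::'n cmat)) \<le> real CARD('n) ^ 3 * (norm A * norm B)"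
proof -
  have e: "norm ((A ** B) $ i $ j) \<le> real CARD('n) * (norm A * norm B)" for i j
  proof -
    have "norm ((A ** B) $ i $ j) = norm (\<Sum>k\<in>UNIV. A $ i $ k * B $ k $ j)"
      by (simp add: matrix_matrix_mult_def)
    also have "\<dots> \<le> (\<Sum>k\<in>UNIV. norm (A $ i $ k * B $ k $ j))" by (rule norm_sum)
    also have "\<dots> \<le> (\<Sum>k\<in>(UNIV::'n set). norm A * norm B)"
    proof (rule sum_mono)
      fix k
      have "norm (A $ i $ k * B $ k $ j) = norm (A $ i $ k) * norm (B $ k $ j)" by (rule norm_mult)
      also have "\<dots> \<le> norm A * norm B" using norm_entry[of A i k] norm_entry[of B k j] by (simp add: mult_mono)
      finally show "norm (A $ i $ k * B $ k $ j) \<le> norm A * norm B" .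
    qed
    also have "\<dots> = real CARD('n) * (norm A * norm B)" by simp
    finally show ?thesis .
  qed
  have "norm (A ** B) \<le> (\<Sum>i\<in>UNIV. norm ((A ** B) $ i))" by (rule norm_vec_sum)
  also have "\<dots> \<le> (\<Sum>i\<in>(UNIV::'n set). \<Sum>j\<in>(UNIV::'n set). norm ((A ** B) $ i $ j))"
    by (intro sum_mono norm_vec_sum)
  also have "\<dots> \<le> (\<Sum>i\<in>(UNIV::'n set). \<Sum>j\<in>(UNIV::'n set). real CARD('n) * (norm A * norm B))"
    by (intro sum_mono e)
  also have "\<dots> = real CARD('n) ^ 3 * (norm A * norm B)" by (simp add: power3_eq_cube)
  finally show ?thesis .
qed

lemma bb_mm: "bounded_bilinear ((**) :: 'n::finite cmat \<Rightarrow> 'n cmat \<Rightarrow> 'n cmat)"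
  apply unfold_locales
  apply (simp_all add: mm_add_r mm_add_l mm_scaleR_l mm_scaleR_r)
  apply (rule exI[of _ "real CARD('n) ^ 3"])
  apply (intro allI)
  subgoal for a b using norm_mm[of a b] by (simp add: ac_simps)
  done

lemma mm_lower:
  assumes "real CARD('n) ^ 3 * norm ((D::'n::finite cmat) - mat 1) \<le> 1/2"
  shows "norm X \<le> 2 * norm (D ** X)" "norm X \<le> 2 * norm (X ** D)"
proof -
  have nn: "0 \<le> norm X" by simp
  have "norm ((D - mat 1) ** X) \<le> real CARD('n) ^ 3 * (norm (D - mat 1) * norm X)" by (rule norm_mm)
  also have "\<dots> = (real CARD('n) ^ 3 * norm (D - mat 1)) * norm X" by simp
  also have "\<dots> \<le> 1/2 * norm X" by (rule mult_right_mono[OF assms nn])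
  finally have a: "norm ((D - mat 1) ** X) \<le> 1/2 * norm X" .
  have "norm (X ** (D - mat 1)) \<le> real CARD('n) ^ 3 * (norm X * norm (D - mat 1))" by (rule norm_mm)
  also have "\<dots> = (real CARD('n) ^ 3 * norm (D - mat 1)) * norm X" by simp
  also have "\<dots> \<le> 1/2 * norm X" by (rule mult_right_mono[OF assms nn])
  finally have b: "norm (X ** (D - mat 1)) \<le> 1/2 * norm X" .
  have "X = D ** X - (D - mat 1) ** X" by (simp add: mm_diff_r)
  then have "norm X \<le> norm (D ** X) + norm ((D - mat 1) ** X)"
    by (metis norm_triangle_ineq4)
  with a show "norm X \<le> 2 * norm (D ** X)" by simp
  have "X = X ** D - X ** (D - mat 1)" by (simp add: mm_diff_l)
  then have "norm X \<le> norm (X ** D) + norm (X ** (D - mat 1))"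
    by (metis norm_triangle_ineq4)
  with b show "norm X \<le> 2 * norm (X ** D)" by simp
qed

lemma inv_ok:
  assumes "real CARD('n) ^ 3 * norm ((D::'n::finite cmat) - mat 1) \<le> 1/2"
  shows "D ** matrix_inv D = mat 1 \<and> matrix_inv D ** D = mat 1"
proof -
  have "\<forall>x. D *v x = 0 \<longrightarrow> x = 0"
  proof (intro allI impI)
    fix x :: "complex ^ 'n" assume x0: "D *v x = 0"
    define X :: "'n cmat" where "X = (\<chi> i j. x $ i)"
    have "D ** X = 0"
    proof -
      have "(D ** X) $ i $ j = (D *v x) $ i" for i j
        by (simp add: X_def matrix_matrix_mult_def matrix_vector_mult_def)
      then show ?thesis using x0 by (simp add: vec_eq_iff)
    qed
    then have "X = 0" using mm_lower(1)[OF assms, of X] by simp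
    then show "x = 0" by (simp add: X_def vec_eq_iff)
  qed
  then obtain B where "B ** D = mat 1" using matrix_left_invertible_ker[of D] by blast
  then have "invertible D" using invertible_left_inverse by blast
  then have "\<exists>A'. D ** A' = mat 1 \<and> A' ** D = mat 1" by (simp add: invertible_def)
  then show ?thesis unfolding matrix_inv_def by (rule someI_ex)
qed

definition bnd :: "(nat \<Rightarrow> 'n::finite cmat) \<Rightarrow> fterm list \<Rightarrow> real" where
  "bnd q xs = sum_list (map (\<lambda>t. \<bar>fst t\<bar> * norm (pw q (snd (snd t)))) xs)"

lemma bnd_Cons: "bnd q (t # xs) = \<bar>fst t\<bar> * norm (pw q (snd (snd t))) + bnd q xs"
  by (simp add: bnd_def)

lemma bnd_nonneg: "0 \<le> bnd q xs"
  by (induct xs) (simp_all add: bnd_def bnd_Cons[unfolded bnd_def])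

lemma evs_bound_high:
  assumes "\<bar>x\<bar> \<le> 1" "\<forall>t\<in>set xs. m \<le> fst (snd t)"
  shows "norm (evs q x xs) \<le> bnd q xs * \<bar>x\<bar> ^ m"
  using assms(2)
proof (induct xs)
  case Nil then show ?case by (simp add: bnd_def)
next
  case (Cons t xs)
  obtain c k w where t: "t = (c, k, w)" by (cases t) auto
  have km: "m \<le> k" using Cons(2) t by simp
  have "norm (evt q x t) = \<bar>c\<bar> * \<bar>x\<bar> ^ k * norm (pw q w)"
    by (simp add: evt_def t abs_mult power_abs)
  also have "\<dots> \<le> \<bar>c\<bar> * \<bar>x\<bar> ^ m * norm (pw q w)"
    using power_decreasing[OF km _ assms(1)] by (intro mult_right_mono mult_left_mono) auto
  finally have a: "norm (evt q x t) \<le> \<bar>c\<bar> * norm (pw q w) * \<bar>x\<bar> ^ m" by (simp add: algebra_simps)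
  have b: "norm (evs q x xs) \<le> bnd q xs * \<bar>x\<bar> ^ m" using Cons by simp
  have "norm (evs q x (t # xs)) \<le> norm (evt q x t) + norm (evs q x xs)"
    by (simp add: evs_Cons norm_triangle_ineq)
  also have "\<dots> \<le> bnd q (t # xs) * \<bar>x\<bar> ^ m" using a b by (simp add: bnd_Cons t algebra_simps)
  finally show ?case .
qed

lemma evs_bound: "\<bar>x\<bar> \<le> 1 \<Longrightarrow> norm (evs q x xs) \<le> bnd q xs"
  using evs_bound_high[of x xs 0] by simp

lemma evs_lip0:
  assumes "\<bar>x\<bar> \<le> 1"
  shows "norm (evs q x xs - evs q 0 xs) \<le> bnd q xs * \<bar>x\<bar>"
proof (induct xs)
  case Nil then show ?case by (simp add: bnd_def)
next
  case (Cons t xs)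
  obtain c k w where t: "t = (c, k, w)" by (cases t) auto
  have a: "norm (evt q x t - evt q 0 t) \<le> \<bar>c\<bar> * norm (pw q w) * \<bar>x\<bar>"
  proof (cases k)
    case 0 then show ?thesis by (simp add: evt_def t)
  next
    case (Suc j)
    have "norm (evt q x t - evt q 0 t) = \<bar>c\<bar> * \<bar>x\<bar> ^ k * norm (pw q w)"
      by (simp add: evt_def t Suc abs_mult power_abs)
    also have "\<dots> \<le> \<bar>c\<bar> * \<bar>x\<bar> ^ 1 * norm (pw q w)"
      using power_decreasing[of 1 k "\<bar>x\<bar>"] assms Suc by (intro mult_right_mono mult_left_mono) auto
    finally show ?thesis by (simp add: algebra_simps)
  qed
  have "evs q x (t # xs) - evs q 0 (t # xs) = (evt q x t - evt q 0 t) + (evs q x xs - evs q 0 xs)"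
    by (simp add: evs_Cons)
  then have "norm (evs q x (t # xs) - evs q 0 (t # xs)) \<le> norm (evt q x t - evt q 0 t) + norm (evs q x xs - evs q 0 xs)"
    by (simp add: norm_triangle_ineq)
  also have "\<dots> \<le> bnd q (t # xs) * \<bar>x\<bar>" using a Cons by (simp add: bnd_Cons t algebra_simps)
  finally show ?case .
qed

lemma evs_filter_split: "evs q x xs = evs q x (filter P xs) + evs q x (filter (\<lambda>t. \<not> P t) xs)"
  by (induct xs) (auto simp: evs_Cons)

lemma mulT_filter: "mulT N xs ys = filter (\<lambda>t. fst (snd t) \<le> N) (mulF xs ys)"
  unfolding mulT_def mulF_def
  by (induct xs) (auto simp: filter_map o_def split_def intro!: arg_cong2[where f=map] filter_cong)

lemma evs_mul_split:
  "evs q x xs ** evs q x ys = evs q x (mulT N xs ys) + evs q x (filter (\<lambda>t. \<not> fst (snd t) \<le> N) (mulF xs ys))"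
  by (simp add: mulT_filter evs_mulF[symmetric] evs_filter_split[symmetric])

lemma evs_scF: "evs q x (scF r xs) = r *\<^sub>R evs q x xs"
  by (induct xs) (auto simp: scF_def evs_Cons evt_def scaleR_add_right)

lemma evs_negF: "evs q x (negF xs) = - evs q x xs"
  by (induct xs) (auto simp: negF_def evs_Cons evt_def)

lemma evs_sbF: "evs q (r * x) xs = evs q x (sbF r xs)"
  by (induct xs) (auto simp: sbF_def evs_Cons evt_def power_mult_distrib algebra_simps)

lemma evs_tpF: "evs q x (tpF j xs) = x ^ j *\<^sub>R evs q x xs"
  by (induct xs) (auto simp: tpF_def evs_Cons evt_def power_add scaleR_add_right algebra_simps)

lemma evs_letF: "evs q x (letF i) = q i"
  by (simp add: letF_def evs_Cons evt_def)

lemma evs_oneF: "evs q x oneF = mat 1"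
  by (simp add: oneF_def evs_Cons evt_def)

lemma evs_commF: "evs q x (commF xs ys) = comm (evs q x xs) (evs q x ys)"
  by (simp add: commF_def evs_append evs_negF evs_mulF comm_def)

lemma evs_mpowF: "evs q x (mpowF n xs) = mpow (evs q x xs) n"
  by (induct n) (simp_all add: evs_oneF evs_mulF)

definition approx :: "(nat \<Rightarrow> 'n::finite cmat) \<Rightarrow> (real \<Rightarrow> 'n cmat) \<Rightarrow> fterm list \<Rightarrow> bool" where
  "approx q f xs \<longleftrightarrow> (\<exists>C e. 0 < e \<and> (\<forall>x. \<bar>x\<bar> < e \<longrightarrow> norm (f x - evs q x xs) \<le> C * \<bar>x\<bar> ^ 7))"

lemma approx_exact: "approx q (\<lambda>x. evs q x xs) xs"
  unfolding approx_def by (rule exI[of _ 0], rule exI[of _ 1]) simp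

lemma approx_cong: "approx q f xs \<Longrightarrow> (\<And>x. evs q x xs = evs q x ys) \<Longrightarrow> (\<And>x. f x = g x) \<Longrightarrow> approx q g ys"
  unfolding approx_def by simp

lemma approx_nrm: "approx q f xs \<Longrightarrow> approx q f (nrm xs)"
  by (erule approx_cong) (simp_all add: evs_nrm)

lemma approx_add:
  assumes "approx q f xs" "approx q g ys"
  shows "approx q (\<lambda>x. f x + g x) (xs @ ys)"
proof -
  obtain C1 e1 where 1: "0 < e1" "\<And>x. \<bar>x\<bar> < e1 \<Longrightarrow> norm (f x - evs q x xs) \<le> C1 * \<bar>x\<bar> ^ 7"
    using assms(1) unfolding approx_def by blast
  obtain C2 e2 where 2: "0 < e2" "\<And>x. \<bar>x\<bar> < e2 \<Longrightarrow> norm (g x - evs q x ys) \<le> C2 * \<bar>x\<bar> ^ 7"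
    using assms(2) unfolding approx_def by blast
  show ?thesis unfolding approx_def
  proof (intro exI conjI allI impI)
    show "0 < min e1 e2" using 1 2 by simp
    fix x :: real assume x: "\<bar>x\<bar> < min e1 e2"
    have "norm (f x + g x - evs q x (xs @ ys)) = norm ((f x - evs q x xs) + (g x - evs q x ys))"
      by (simp add: evs_append algebra_simps)
    also have "\<dots> \<le> norm (f x - evs q x xs) + norm (g x - evs q x ys)"
      by (rule norm_triangle_ineq)
    finally have "norm (f x + g x - evs q x (xs @ ys)) \<le> norm (f x - evs q x xs) + norm (g x - evs q x ys)" .
    also have "\<dots> \<le> C1 * \<bar>x\<bar> ^ 7 + C2 * \<bar>x\<bar> ^ 7" using 1 2 x by (intro add_mono) auto
    finally show "norm (f x + g x - evs q x (xs @ ys)) \<le> (C1 + C2) * \<bar>x\<bar> ^ 7" by (simp add: algebra_simps)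
  qed
qed

lemma approx_sc:
  assumes "approx q f xs"
  shows "approx q (\<lambda>x. r *\<^sub>R f x) (scF r xs)"
proof -
  obtain C e where 1: "0 < e" "\<And>x. \<bar>x\<bar> < e \<Longrightarrow> norm (f x - evs q x xs) \<le> C * \<bar>x\<bar> ^ 7"
    using assms(1) unfolding approx_def by blast
  show ?thesis unfolding approx_def
  proof (intro exI conjI allI impI)
    show "0 < e" by fact
    fix x :: real assume x: "\<bar>x\<bar> < e"
    have "norm (r *\<^sub>R f x - evs q x (scF r xs)) = \<bar>r\<bar> * norm (f x - evs q x xs)"
      by (simp add: evs_scF flip: scaleR_diff_right)
    also have "\<dots> \<le> \<bar>r\<bar> * (C * \<bar>x\<bar> ^ 7)" using 1 x by (intro mult_left_mono) auto
    finally show "norm (r *\<^sub>R f x - evs q x (scF r xs)) \<le> (\<bar>r\<bar> * C) * \<bar>x\<bar> ^ 7" by simp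
  qed
qed

lemma approx_scale_arg:
  assumes "approx q f xs" "\<bar>r\<bar> \<le> 1"
  shows "approx q (\<lambda>x. f (r * x)) (sbF r xs)"
proof -
  obtain C e where 1: "0 < e" "\<And>x. \<bar>x\<bar> < e \<Longrightarrow> norm (f x - evs q x xs) \<le> C * \<bar>x\<bar> ^ 7"
    using assms(1) unfolding approx_def by blast
  show ?thesis unfolding approx_def
  proof (intro exI conjI allI impI)
    show "0 < e" by fact
    fix x :: real assume x: "\<bar>x\<bar> < e"
    have rx: "\<bar>r * x\<bar> \<le> \<bar>x\<bar>" using assms(2) by (simp add: abs_mult mult_left_le_one_le)
    then have "\<bar>r * x\<bar> < e" using x by simp
    then have "norm (f (r * x) - evs q (r * x) xs) \<le> C * \<bar>r * x\<bar> ^ 7" using 1 by blast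
    also have "\<dots> \<le> \<bar>C\<bar> * \<bar>r * x\<bar> ^ 7" by (simp add: mult_right_mono)
    also have "\<dots> \<le> \<bar>C\<bar> * \<bar>x\<bar> ^ 7" using rx by (intro mult_left_mono power_mono) auto
    finally show "norm (f (r * x) - evs q x (sbF r xs)) \<le> \<bar>C\<bar> * \<bar>x\<bar> ^ 7" by (simp add: evs_sbF)
  qed
qed

lemma approx_mul:
  fixes q :: "nat \<Rightarrow> 'n::finite cmat"
  assumes "approx q f xs" "approx q g ys"
  shows "approx q (\<lambda>x. f x ** g x) (mulT 6 xs ys)"
proof -
  obtain C1 e1 where 1: "0 < e1" "\<And>x. \<bar>x\<bar> < e1 \<Longrightarrow> norm (f x - evs q x xs) \<le> C1 * \<bar>x\<bar> ^ 7"
    using assms(1) unfolding approx_def by blast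
  obtain C2 e2 where 2: "0 < e2" "\<And>x. \<bar>x\<bar> < e2 \<Longrightarrow> norm (g x - evs q x ys) \<le> C2 * \<bar>x\<bar> ^ 7"
    using assms(2) unfolding approx_def by blast
  define H where "H = filter (\<lambda>t. \<not> fst (snd t) \<le> 6) (mulF xs ys)"
  define K where "K = real CARD('n) ^ 3"
  have K0: "0 \<le> K" by (simp add: K_def)
  define C where "C = K * (\<bar>C1\<bar> * (bnd q ys + \<bar>C2\<bar>)) + K * (bnd q xs * \<bar>C2\<bar>) + bnd q H"
  show ?thesis unfolding approx_def
  proof (intro exI conjI allI impI)
    show "0 < min (min e1 e2) 1" using 1 2 by simp
    fix x :: real assume x: "\<bar>x\<bar> < min (min e1 e2) 1"
    then have x1: "\<bar>x\<bar> \<le> 1" by simp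
    have p7: "\<bar>x\<bar> ^ 7 \<le> 1" using x1 by (simp add: power_le_one)
    define X where "X = evs q x xs"
    define Y where "Y = evs q x ys"
    have f1: "norm (f x - X) \<le> \<bar>C1\<bar> * \<bar>x\<bar> ^ 7"
      using 1(2)[of x] x mult_right_mono[OF abs_ge_self[of C1] zero_le_power[of "\<bar>x\<bar>" 7]]
      unfolding X_def by simp
    have g1: "norm (g x - Y) \<le> \<bar>C2\<bar> * \<bar>x\<bar> ^ 7"
      using 2(2)[of x] x mult_right_mono[OF abs_ge_self[of C2] zero_le_power[of "\<bar>x\<bar>" 7]]
      unfolding Y_def by simp
    have g2: "norm (g x - Y) \<le> \<bar>C2\<bar>"
      using g1 mult_left_le[OF p7 abs_ge_zero[of C2]] by linarith
    have Xb: "norm X \<le> bnd q xs" unfolding X_def using evs_bound[OF x1] .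
    have Yb: "norm Y \<le> bnd q ys" unfolding Y_def using evs_bound[OF x1] .
    have gb: "norm (g x) \<le> bnd q ys + \<bar>C2\<bar>"
      using norm_triangle_ineq[of Y "g x - Y"] Yb g2 by simp
    have Hb: "norm (evs q x H) \<le> bnd q H * \<bar>x\<bar> ^ 7"
      by (rule evs_bound_high[OF x1]) (simp add: H_def)
    have split: "f x ** g x - evs q x (mulT 6 xs ys) = (f x - X) ** g x + X ** (g x - Y) + evs q x H"
      using evs_mul_split[of q x xs ys 6] unfolding X_def Y_def H_def
      by (simp add: mm_diff_r mm_diff_l algebra_simps)
    have a: "norm ((f x - X) ** g x) \<le> K * (\<bar>C1\<bar> * (bnd q ys + \<bar>C2\<bar>)) * \<bar>x\<bar> ^ 7"
    proof -
      have "norm ((f x - X) ** g x) \<le> K * (norm (f x - X) * norm (g x))" unfolding K_def by (rule norm_mm)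
      also have "\<dots> \<le> K * ((\<bar>C1\<bar> * \<bar>x\<bar> ^ 7) * (bnd q ys + \<bar>C2\<bar>))"
        using f1 gb K0 by (intro mult_left_mono mult_mono) auto
      finally show ?thesis by (simp add: algebra_simps)
    qed
    have b: "norm (X ** (g x - Y)) \<le> K * (bnd q xs * \<bar>C2\<bar>) * \<bar>x\<bar> ^ 7"
    proof -
      have "norm (X ** (g x - Y)) \<le> K * (norm X * norm (g x - Y))" unfolding K_def by (rule norm_mm)
      also have "\<dots> \<le> K * (bnd q xs * (\<bar>C2\<bar> * \<bar>x\<bar> ^ 7))"
        using Xb g1 K0 bnd_nonneg by (intro mult_left_mono mult_mono) auto
      finally show ?thesis by (simp add: algebra_simps)
    qed
    have "norm (f x ** g x - evs q x (mulT 6 xs ys))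
        \<le> norm ((f x - X) ** g x) + norm (X ** (g x - Y)) + norm (evs q x H)"
      unfolding split by (meson norm_triangle_ineq order_trans add_mono order_refl)
    also have "\<dots> \<le> C * \<bar>x\<bar> ^ 7" using a b Hb unfolding C_def by (simp add: algebra_simps)
    finally show "norm (f x ** g x - evs q x (mulT 6 xs ys)) \<le> C * \<bar>x\<bar> ^ 7" .
  qed
qed

lemma approx_near:
  assumes "approx q f xs" "evs q 0 xs = M" "0 < \<epsilon>"
  shows "\<exists>d>0. \<forall>x. \<bar>x\<bar> < d \<longrightarrow> norm (f x - M) < \<epsilon>"
proof -
  obtain C e where 1: "0 < e" "\<And>x. \<bar>x\<bar> < e \<Longrightarrow> norm (f x - evs q x xs) \<le> C * \<bar>x\<bar> ^ 7"
    using assms(1) unfolding approx_def by blast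
  define B where "B = \<bar>C\<bar> + bnd q xs + 1"
  have B: "0 < B" using bnd_nonneg[of q xs] by (simp add: B_def)
  show ?thesis
  proof (intro exI conjI allI impI)
    show "0 < min (min e 1) (\<epsilon> / B)" using 1 B assms(3) by simp
    fix x :: real assume x: "\<bar>x\<bar> < min (min e 1) (\<epsilon> / B)"
    then have x1: "\<bar>x\<bar> \<le> 1" by simp
    have p7: "\<bar>x\<bar> ^ 7 \<le> \<bar>x\<bar>" using power_decreasing[of 1 7 "\<bar>x\<bar>"] x1 by simp
    have "norm (f x - evs q x xs) \<le> \<bar>C\<bar> * \<bar>x\<bar>"
    proof -
      have "norm (f x - evs q x xs) \<le> C * \<bar>x\<bar> ^ 7" using 1(2)[of x] x by simp
      also have "\<dots> \<le> \<bar>C\<bar> * \<bar>x\<bar> ^ 7" by (rule mult_right_mono) auto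
      also have "\<dots> \<le> \<bar>C\<bar> * \<bar>x\<bar>" using p7 by (rule mult_left_mono) auto
      finally show ?thesis .
    qed
    moreover have "norm (evs q x xs - M) \<le> bnd q xs * \<bar>x\<bar>" using evs_lip0[OF x1, of q xs] assms(2) by simp
    ultimately have "norm (f x - M) \<le> (\<bar>C\<bar> + bnd q xs) * \<bar>x\<bar>"
      using norm_triangle_ineq[of "f x - evs q x xs" "evs q x xs - M"] by (simp add: algebra_simps)
    also have "\<dots> \<le> B * \<bar>x\<bar>" by (simp add: B_def mult_right_mono)
    also have "\<dots> < \<epsilon>" using x B by (simp add: field_simps)
    finally show "norm (f x - M) < \<epsilon>" .
  qed
qed

lemma mvb:
  fixes f :: "real \<Rightarrow> 'a::real_normed_vector"
  assumes der: "\<And>x. x \<in> closed_segment a b \<Longrightarrow> (f has_vector_derivative f' x) (at x within closed_segment a b)"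
    and bnd: "\<And>x. x \<in> closed_segment a b \<Longrightarrow> norm (f' x) \<le> B"
  shows "norm (f b - f a) \<le> B * \<bar>b - a\<bar>"
proof -
  have "norm (f b - f a) \<le> B * norm (b - a)"
  proof (rule differentiable_bound[of "closed_segment a b" f "\<lambda>x h. h *\<^sub>R f' x" B b a])
    show "convex (closed_segment a b)" by simp
    show "\<And>x. x \<in> closed_segment a b \<Longrightarrow> (f has_derivative (\<lambda>h. h *\<^sub>R f' x)) (at x within closed_segment a b)"
      using der by (simp add: has_vector_derivative_def)
    fix x assume x: "x \<in> closed_segment a b"
    have "onorm (\<lambda>h::real. h *\<^sub>R f' x) = onorm (\<lambda>h::real. h) * norm (f' x)"
      by (rule onorm_scaleR_left) (rule bounded_linear_ident)
    also have "\<dots> = norm (f' x)" by (simp add: onorm_id)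
    finally show "onorm (\<lambda>h::real. h *\<^sub>R f' x) \<le> B" using bnd[OF x] by simp
  qed auto
  then show ?thesis by simp
qed

lemma boot:
  fixes E E' :: "real \<Rightarrow> 'a::real_normed_vector"
  assumes der: "\<And>x. x \<in> closed_segment a b \<Longrightarrow> (E has_vector_derivative E' x) (at x within closed_segment a b)"
    and bnd: "\<And>x. x \<in> closed_segment a b \<Longrightarrow> norm (E' x) \<le> L * norm (E x) + K"
    and L: "0 \<le> L" and K: "0 \<le> K" and small: "\<bar>b - a\<bar> * L \<le> 1/2" and E0: "E a = 0"
  shows "norm (E b) \<le> 2 * K * \<bar>b - a\<bar>"
proof -
  define S where "S = closed_segment a b"
  have cont: "continuous_on S E"
    unfolding S_def continuous_on_eq_continuous_within
    using der has_vector_derivative_continuous by blast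
  then have "continuous_on S (\<lambda>x. norm (E x))" by (intro continuous_intros)
  moreover have "compact S" "S \<noteq> {}" by (auto simp: S_def)
  ultimately obtain xm where xm: "xm \<in> S" and mx: "\<And>y. y \<in> S \<Longrightarrow> norm (E y) \<le> norm (E xm)"
    using continuous_attains_sup[of S "\<lambda>x. norm (E x)"] by blast
  define m where "m = norm (E xm)"
  have sub: "closed_segment a xm \<subseteq> S"
    using xm by (simp add: S_def closed_segment_subset)
  have "norm (E xm - E a) \<le> (L * m + K) * \<bar>xm - a\<bar>"
  proof (rule mvb)
    fix x assume x: "x \<in> closed_segment a xm"
    then have xS: "x \<in> S" using sub by blast
    show "(E has_vector_derivative E' x) (at x within closed_segment a xm)"
      using der[of x] xS sub unfolding S_def by (blast intro: has_vector_derivative_within_subset)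
    have "norm (E' x) \<le> L * norm (E x) + K" using bnd xS S_def by blast
    also have "\<dots> \<le> L * m + K" using mx[OF xS] L unfolding m_def by (simp add: mult_left_mono)
    finally show "norm (E' x) \<le> L * m + K" .
  qed
  then have m1: "m \<le> (L * m + K) * \<bar>xm - a\<bar>" using E0 by (simp add: m_def)
  have "\<bar>xm - a\<bar> \<le> \<bar>b - a\<bar>"
    using segment_bound1[of xm a b] xm by (simp add: S_def)
  moreover have "0 \<le> m" by (simp add: m_def)
  ultimately have "m \<le> (L * m + K) * \<bar>b - a\<bar>"
    using m1 L K by (meson mult_left_mono add_nonneg_nonneg mult_nonneg_nonneg order_trans)
  also have "\<dots> = (\<bar>b - a\<bar> * L) * m + K * \<bar>b - a\<bar>" by (simp add: algebra_simps)
  also have "\<dots> \<le> m / 2 + K * \<bar>b - a\<bar>"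
    using small \<open>0 \<le> m\<close> mult_right_mono[OF small \<open>0 \<le> m\<close>] by simp
  finally have "m \<le> 2 * K * \<bar>b - a\<bar>" by simp
  moreover have "norm (E b) \<le> m" using mx[of b] by (simp add: S_def m_def)
  ultimately show ?thesis by simp
qed

lemma taylor_bound:
  fixes f :: "nat \<Rightarrow> real \<Rightarrow> 'a::real_normed_vector"
  assumes d: "\<And>k s. \<bar>s - t\<bar> < r \<Longrightarrow> (f k has_vector_derivative f (Suc k) s) (at s)"
    and r: "0 < r"
  shows "\<exists>C. \<forall>h. \<bar>h\<bar> \<le> r/2 \<longrightarrow>
           norm (f 0 (t + h) - (\<Sum>k<m. (h ^ k / fact k) *\<^sub>R f k t)) \<le> C * \<bar>h\<bar> ^ m"
  using d
proof (induct m arbitrary: f)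
  case 0
  have "continuous_on {t - r/2 .. t + r/2} (f 0)"
  proof (rule continuous_at_imp_continuous_on, intro ballI)
    fix x assume "x \<in> {t - r/2 .. t + r/2}"
    then have "\<bar>x - t\<bar> < r" using r by auto
    then show "isCont (f 0) x" using 0 has_vector_derivative_continuous by blast
  qed
  then have "bounded (f 0 ` {t - r/2 .. t + r/2})"
    by (intro compact_imp_bounded compact_continuous_image) auto
  then obtain B where B: "\<And>x. x \<in> {t - r/2 .. t + r/2} \<Longrightarrow> norm (f 0 x) \<le> B"
    unfolding bounded_iff by blast
  show ?case
    by (rule exI[of _ B]) (auto intro!: B)
next
  case (Suc m)
  obtain C0 where C0: "\<And>h. \<bar>h\<bar> \<le> r/2 \<Longrightarrow>
      norm (f 1 (t + h) - (\<Sum>k<m. (h ^ k / fact k) *\<^sub>R f (Suc k) t)) \<le> C0 * \<bar>h\<bar> ^ m"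
    using Suc(1)[of "\<lambda>k. f (Suc k)"] Suc(2) by auto
  define C where "C = \<bar>C0\<bar>"
  have Cnn: "0 \<le> C" by (simp add: C_def)
  have C: "norm (f 1 (t + h) - (\<Sum>k<m. (h ^ k / fact k) *\<^sub>R f (Suc k) t)) \<le> C * \<bar>h\<bar> ^ m"
    if "\<bar>h\<bar> \<le> r/2" for h
  proof -
    have "C0 * \<bar>h\<bar> ^ m \<le> C * \<bar>h\<bar> ^ m" unfolding C_def by (intro mult_right_mono) auto
    then show ?thesis using C0[OF that] by linarith
  qed
  define g where "g h = f 0 (t + h) - (\<Sum>k<Suc m. (h ^ k / fact k) *\<^sub>R f k t)" for h
  define g' where "g' h = f 1 (t + h) - (\<Sum>k<m. (h ^ k / fact k) *\<^sub>R f (Suc k) t)" for h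
  have gder: "(g has_vector_derivative g' x) (at x)" if x: "\<bar>x\<bar> < r" for x
  proof -
    have "\<bar>(t + x) - t\<bar> < r" using x by simp
    then have d0: "(f 0 has_vector_derivative f 1 (t + x)) (at (t + x))" using Suc(2)[of "t + x" 0] by simp
    have dA: "((\<lambda>h. f 0 (t + h)) has_vector_derivative f 1 (t + x)) (at x)"
    proof -
      have d1: "((\<lambda>h. t + h) has_vector_derivative 1) (at x)"
        using has_vector_derivative_add[OF has_vector_derivative_const has_vector_derivative_id] by simp
      show ?thesis using vector_diff_chain_at[OF d1, of "f 0" "f 1 (t + x)"] d0 by (simp add: o_def)
    qed
    have dB: "((\<lambda>h. \<Sum>k<Suc m. (h ^ k / fact k) *\<^sub>R f k t) has_vector_derivative
        (\<Sum>k<Suc m. (real k * x ^ (k - 1) / fact k) *\<^sub>R f k t)) (at x)"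
    proof (rule has_vector_derivative_sum)
      fix k assume "k \<in> {..<Suc m}"
      have "((\<lambda>h. h ^ k / fact k) has_real_derivative (real k * x ^ (k - 1) / fact k)) (at x)"
        by (auto intro!: derivative_eq_intros)
      from has_vector_derivative_scaleR[OF this has_vector_derivative_const[of "f k t"]]
      show "((\<lambda>h. (h ^ k / fact k) *\<^sub>R f k t) has_vector_derivative
          (real k * x ^ (k - 1) / fact k) *\<^sub>R f k t) (at x)" by simp
    qed
    have eq: "(\<Sum>k<Suc m. (real k * x ^ (k - 1) / fact k) *\<^sub>R f k t)
        = (\<Sum>k<m. (x ^ k / fact k) *\<^sub>R f (Suc k) t)"
    proof -
      have "(\<Sum>k<Suc m. (real k * x ^ (k - 1) / fact k) *\<^sub>R f k t)
          = (\<Sum>k<m. (real (Suc k) * x ^ k / fact (Suc k)) *\<^sub>R f (Suc k) t)"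
        by (subst sum.lessThan_Suc_shift) simp
      also have "\<dots> = (\<Sum>k<m. (x ^ k / fact k) *\<^sub>R f (Suc k) t)"
      proof (rule sum.cong)
        fix k assume "k \<in> {..<m}"
        have "real (Suc k) * x ^ k / fact (Suc k) = x ^ k / fact k"
          by (simp add: fact_Suc del: of_nat_Suc)
        then show "(real (Suc k) * x ^ k / fact (Suc k)) *\<^sub>R f (Suc k) t = (x ^ k / fact k) *\<^sub>R f (Suc k) t"
          by simp
      qed simp
      finally show ?thesis .
    qed
    show ?thesis
      using has_vector_derivative_diff[OF dA dB] unfolding g_def[abs_def] g'_def eq .
  qed
  have "\<exists>C'. \<forall>h. \<bar>h\<bar> \<le> r/2 \<longrightarrow> norm (g h) \<le> C' * \<bar>h\<bar> ^ Suc m"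
  proof (intro exI allI impI)
    fix h :: real assume h: "\<bar>h\<bar> \<le> r/2"
    have seg: "\<And>x. x \<in> closed_segment 0 h \<Longrightarrow> \<bar>x\<bar> \<le> \<bar>h\<bar>"
      using segment_bound1[of _ 0 h] by simp
    have "norm (g h - g 0) \<le> (C * \<bar>h\<bar> ^ m) * \<bar>h - 0\<bar>"
    proof (rule mvb)
      fix x assume x: "x \<in> closed_segment 0 h"
      then have "\<bar>x\<bar> < r" using seg[OF x] h r by simp
      then show "(g has_vector_derivative g' x) (at x within closed_segment 0 h)"
        using gder has_vector_derivative_at_within by blast
      have "norm (g' x) \<le> C * \<bar>x\<bar> ^ m" unfolding g'_def using C seg[OF x] h by simp
      also have "\<dots> \<le> C * \<bar>h\<bar> ^ m"
        using seg[OF x] Cnn by (intro mult_left_mono power_mono) auto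
      finally show "norm (g' x) \<le> C * \<bar>h\<bar> ^ m" .
    qed
    moreover have "g 0 = 0"
      unfolding g_def by (subst sum.lessThan_Suc_shift) simp
    ultimately show "norm (g h) \<le> C * \<bar>h\<bar> ^ Suc m" by (simp add: algebra_simps)
  qed
  then show ?case unfolding g_def .
qed

definition dF :: "fterm list \<Rightarrow> fterm list" where
  "dF xs = map (\<lambda>(c,k,w). (c * real k, k - 1, w)) xs"

lemma evs_deriv:
  "((\<lambda>r. evs q (r - a) xs) has_vector_derivative evs q (r - a) (dF xs)) (at r within S)"
proof (induct xs)
  case Nil then show ?case by (simp add: dF_def)
next
  case (Cons t xs)
  obtain c k w where t: "t = (c, k, w)" by (cases t) auto
  have "((\<lambda>r. c * (r - a) ^ k) has_real_derivative (c * real k * (r - a) ^ (k - 1))) (at r within S)"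
    by (auto intro!: derivative_eq_intros)
  from has_vector_derivative_scaleR[OF this has_vector_derivative_const[of "pw q w"]]
  have "((\<lambda>r. evt q (r - a) t) has_vector_derivative evt q (r - a) (c * real k, k - 1, w)) (at r within S)"
    by (simp add: evt_def t)
  from has_vector_derivative_add[OF this Cons]
  show ?case by (simp add: evs_Cons dF_def t)
qed

lemma evs_even_odd:
  "evs q x xs - evs q (- x) xs = evs q x (filter (\<lambda>t. odd (fst (snd t))) xs)
      - evs q (- x) (filter (\<lambda>t. odd (fst (snd t))) xs)"
proof (induct xs)
  case Nil then show ?case by simp
next
  case (Cons t xs)
  obtain c k w where t: "t = (c, k, w)" by (cases t) auto
  show ?case
  proof (cases "odd k")
    case True then show ?thesis using Cons by (simp add: t evs_Cons algebra_simps)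
  next
    case False
    then have "evt q x t = evt q (- x) t" by (simp add: t evt_def)
    then show ?thesis using Cons False by (simp add: t evs_Cons algebra_simps)
  qed
qed

lemma mpow_neg: "mpow (- A) k = ((-1) ^ k) *\<^sub>R mpow (A::'n::finite cmat) k"
  by (induct k) (simp_all add: mm_neg_l mm_scaleR_r)

lemma comm_mpow: "P ** A = A ** P \<Longrightarrow> P ** mpow (A::'n::finite cmat) k = mpow A k ** P"
proof (induct k)
  case 0 then show ?case by simp
next
  case (Suc k)
  have "P ** mpow A (Suc k) = (P ** A) ** mpow A k" by (simp add: matrix_mul_assoc)
  also have "\<dots> = (A ** P) ** mpow A k" using Suc.prems by simp
  also have "\<dots> = A ** (P ** mpow A k)" by (simp only: matrix_mul_assoc)
  also have "\<dots> = A ** (mpow A k ** P)" using Suc by simp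
  also have "\<dots> = mpow A (Suc k) ** P" by (simp add: matrix_mul_assoc)
  finally show ?case .
qed

lemma Fpoly_sum: "Fpoly a2 a3 a4 a5 a6 A = mat 1 + (1/2) *\<^sub>R mpow A 1 + a2 *\<^sub>R mpow A 2 + a3 *\<^sub>R mpow A 3
      + a4 *\<^sub>R mpow A 4 + a5 *\<^sub>R mpow A 5 + a6 *\<^sub>R mpow (A::'n::finite cmat) 6"
  by (simp add: Fpoly_def)

lemma comm_Fpoly:
  assumes "P ** A = A ** (P::'n::finite cmat)"
  shows "P ** Fpoly a2 a3 a4 a5 a6 A = Fpoly a2 a3 a4 a5 a6 A ** P"
  unfolding Fpoly_sum
  by (simp add: mm_add_l mm_add_r mm_scaleR_l mm_scaleR_r comm_mpow[OF assms] assms)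

lemma Fpoly_neg_comm: "Fpoly a2 a3 a4 a5 a6 (- A) ** Fpoly a2 a3 a4 a5 a6 A
    = Fpoly a2 a3 a4 a5 a6 A ** Fpoly a2 a3 a4 a5 a6 (-(A::'n::finite cmat))"
proof (rule comm_Fpoly)
  have c: "mpow A k ** A = A ** mpow A k" for k
    using comm_mpow[of A A k] by simp
  show "Fpoly a2 a3 a4 a5 a6 (- A) ** A = A ** Fpoly a2 a3 a4 a5 a6 (- A)"
    unfolding Fpoly_sum mpow_neg
    by (simp add: mm_add_l mm_add_r mm_scaleR_l mm_scaleR_r mm_diff_l mm_diff_r mm_neg_l mm_neg_r c)
qed

lemma seg_near:
  fixes r a b t d :: real
  assumes "r \<in> closed_segment a b" "\<bar>a - t\<bar> \<le> d" "\<bar>b - t\<bar> \<le> d"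
  shows "\<bar>r - t\<bar> \<le> d"
proof -
  have "r \<in> (if a \<le> b then {a..b} else {b..a})" using assms(1) closed_segment_eq_real_ivl by metis
  then show ?thesis using assms(2,3) by (cases "a \<le> b") auto
qed

lemma cont_bound:
  fixes Q :: "real \<Rightarrow> 'a::real_normed_vector"
  assumes "\<And>s. \<bar>s - t\<bar> < \<delta> \<Longrightarrow> (Q has_vector_derivative Q' s) (at s)" "0 < \<delta>"
  shows "\<exists>M\<ge>0. \<forall>r. \<bar>r - t\<bar> \<le> \<delta>/2 \<longrightarrow> norm (Q r) \<le> M"
proof -
  have "continuous_on {t - \<delta>/2 .. t + \<delta>/2} Q"
  proof (rule continuous_at_imp_continuous_on, intro ballI)
    fix x assume "x \<in> {t - \<delta>/2 .. t + \<delta>/2}"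
    then have "\<bar>x - t\<bar> < \<delta>" using assms(2) by auto
    then show "isCont Q x" using assms(1) has_vector_derivative_continuous by blast
  qed
  then have "bounded (Q ` {t - \<delta>/2 .. t + \<delta>/2})"
    by (intro compact_imp_bounded compact_continuous_image) auto
  then obtain B where B: "\<forall>x\<in>{t - \<delta>/2 .. t + \<delta>/2}. norm (Q x) \<le> B"
    unfolding bounded_iff by blast
  show ?thesis
  proof (intro exI conjI allI impI)
    show "0 \<le> \<bar>B\<bar>" by simp
    fix r assume "\<bar>r - t\<bar> \<le> \<delta>/2"
    then have "r \<in> {t - \<delta>/2 .. t + \<delta>/2}" by (auto simp: abs_if split: if_splits)
    then show "norm (Q r) \<le> \<bar>B\<bar>" using B by fastforce
  qed
qed

lemma semigroup:
  fixes Q :: "real \<Rightarrow> 'n::finite cmat" and U :: "real \<Rightarrow> real \<Rightarrow> 'n cmat"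
  assumes U_ode: "\<And>s s0. \<bar>s - t\<bar> < \<delta> \<Longrightarrow> \<bar>s0 - t\<bar> < \<delta> \<Longrightarrow>
                 ((\<lambda>r. U r s0) has_vector_derivative (Q s ** U s s0)) (at s)"
    and U_init: "\<And>s0. \<bar>s0 - t\<bar> < \<delta> \<Longrightarrow> U s0 s0 = mat 1"
    and QM: "\<And>r. \<bar>r - t\<bar> \<le> \<delta>/2 \<Longrightarrow> norm (Q r) \<le> M" and M: "0 \<le> M" and dpos: "0 < \<delta>"
    and s0: "\<bar>s0 - t\<bar> \<le> \<delta>/2" and s: "\<bar>s - t\<bar> \<le> \<delta>/2"
    and small: "\<bar>s - s0\<bar> * (real CARD('n) ^ 3 * M) \<le> 1/2"
  shows "U s s0 ** U s0 t = U s t"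
proof -
  define E where "E r = U r s0 ** U s0 t - U r t" for r
  define E' where "E' r = Q r ** E r" for r
  have "norm (E s) \<le> 2 * 0 * \<bar>s - s0\<bar>"
  proof (rule boot[where L = "real CARD('n) ^ 3 * M" and K = 0 and E' = E'])
    fix r assume r: "r \<in> closed_segment s0 s"
    have rt: "\<bar>r - t\<bar> < \<delta>" using seg_near[OF r s0 s] dpos by linarith
    have s0t: "\<bar>s0 - t\<bar> < \<delta>" "\<bar>t - t\<bar> < \<delta>" using s0 dpos by auto
    have d1: "((\<lambda>r. U r s0) has_vector_derivative (Q r ** U r s0)) (at r)" using U_ode rt s0t by blast
    have d2: "((\<lambda>r. U r t) has_vector_derivative (Q r ** U r t)) (at r)" using U_ode rt s0t by blast
    have d1': "((\<lambda>r. U r s0 ** U s0 t) has_vector_derivative ((Q r ** U r s0) ** U s0 t)) (at r)"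
      using bounded_linear.has_vector_derivative[OF bounded_bilinear.bounded_linear_left[OF bb_mm] d1] .
    have "E' r = (Q r ** U r s0) ** U s0 t - Q r ** U r t"
      by (simp add: E'_def E_def mm_diff_l matrix_mul_assoc)
    then show "(E has_vector_derivative E' r) (at r within closed_segment s0 s)"
      using has_vector_derivative_diff[OF d1' d2] unfolding E_def[abs_def]
      by (simp add: has_vector_derivative_at_within)
    have "norm (E' r) \<le> real CARD('n) ^ 3 * (norm (Q r) * norm (E r))" unfolding E'_def by (rule norm_mm)
    also have "\<dots> \<le> real CARD('n) ^ 3 * (M * norm (E r))"
      using QM[OF seg_near[OF r s0 s]] by (intro mult_left_mono mult_right_mono) auto
    finally show "norm (E' r) \<le> real CARD('n) ^ 3 * M * norm (E r) + 0" by simp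
  next
    show "0 \<le> real CARD('n) ^ 3 * M" using M by simp
    show "\<bar>s - s0\<bar> * (real CARD('n) ^ 3 * M) \<le> 1/2" by fact
    have "\<bar>s0 - t\<bar> < \<delta>" using s0 dpos by auto
    then show "E s0 = 0" by (simp add: E_def U_init)
  qed simp
  then show ?thesis by (simp add: E_def)
qed

lemma V_approx:
  fixes Q :: "real \<Rightarrow> 'n::finite cmat" and V :: "real \<Rightarrow> 'n cmat"
  assumes anal: "analytic_near Q t \<delta>"
    and Vd: "\<And>s. \<bar>s - t\<bar> < \<delta> \<Longrightarrow> (V has_vector_derivative (Q s ** V s)) (at s)"
    and V0: "V t = mat 1"
    and hQt: "\<And>x. evs (\<lambda>i. hderiv i Q t) x Qt = (\<Sum>k<7. (x ^ k / fact k) *\<^sub>R hderiv k Q t)"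
    and hV0: "evs (\<lambda>i. hderiv i Q t) 0 Vl = mat 1"
    and hH: "\<And>x. evs (\<lambda>i. hderiv i Q t) x (mulF Qt Vl) - evs (\<lambda>i. hderiv i Q t) x (dF Vl)
                 = evs (\<lambda>i. hderiv i Q t) x Hh"
    and hHh: "\<forall>tm\<in>set Hh. 6 \<le> fst (snd tm)"
  shows "approx (\<lambda>i. hderiv i Q t) (\<lambda>h. V (t + h)) Vl"
proof -
  define q where "q = (\<lambda>i. hderiv i Q t)"
  from anal have dpos: "0 < \<delta>"
    and der: "\<And>k s. \<bar>s - t\<bar> < \<delta> \<Longrightarrow> (hderiv k Q has_vector_derivative hderiv (Suc k) Q s) (at s)"
    unfolding analytic_near_def by auto
  obtain C7 where C7: "\<And>h. \<bar>h\<bar> \<le> \<delta>/2 \<Longrightarrow>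
      norm (hderiv 0 Q (t + h) - (\<Sum>k<7. (h ^ k / fact k) *\<^sub>R hderiv k Q t)) \<le> C7 * \<bar>h\<bar> ^ 7"
    using taylor_bound[of t \<delta> "\<lambda>k. hderiv k Q" 7] der dpos by blast
  obtain M where M: "0 \<le> M" "\<And>r. \<bar>r - t\<bar> \<le> \<delta>/2 \<Longrightarrow> norm (Q r) \<le> M"
    using cont_bound[of t \<delta> Q "hderiv 1 Q"] der[of _ 0] dpos by auto
  define cN where "cN = real CARD('n) ^ 3"
  have cN: "0 \<le> cN" by (simp add: cN_def)
  define L where "L = cN * M"
  have L: "0 \<le> L" using cN M by (simp add: L_def)
  define K0 where "K0 = cN * \<bar>C7\<bar> * bnd q Vl + bnd q Hh"
  have K0: "0 \<le> K0" using cN bnd_nonneg[of q Vl] bnd_nonneg[of q Hh] by (simp add: K0_def)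
  define e where "e = min (\<delta>/2) (min 1 (1 / (2 * (L + 1))))"
  have epos: "0 < e" using dpos L by (simp add: e_def)
  show ?thesis unfolding approx_def q_def[symmetric]
  proof (intro exI conjI allI impI)
    show "0 < e" by fact
    fix h :: real assume h: "\<bar>h\<bar> < e"
    have h1: "\<bar>h\<bar> \<le> 1" and hd: "\<bar>h\<bar> \<le> \<delta>/2" using h by (auto simp: e_def)
    have hL: "\<bar>h\<bar> * L \<le> 1/2"
    proof -
      have "\<bar>h\<bar> < 1 / (2 * (L + 1))" using h by (simp add: e_def)
      then have "\<bar>h\<bar> * (2 * (L + 1)) < 1" using L by (simp add: field_simps)
      then show ?thesis using L by (simp add: algebra_simps)
    qed
    define E where "E r = V r - evs q (r - t) Vl" for r
    define E' where "E' r = Q r ** V r - evs q (r - t) (dF Vl)" for r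
    have "norm (E (t + h)) \<le> 2 * (K0 * \<bar>h\<bar> ^ 6) * \<bar>(t + h) - t\<bar>"
    proof (rule boot[where L = L and E' = E'])
      fix r assume r: "r \<in> closed_segment t (t + h)"
      have rx: "\<bar>r - t\<bar> \<le> \<bar>h\<bar>" using segment_bound1[OF r] by simp
      then have rt: "\<bar>r - t\<bar> < \<delta>" using hd dpos by linarith
      show "(E has_vector_derivative E' r) (at r within closed_segment t (t + h))"
        unfolding E_def[abs_def] E'_def
        by (rule has_vector_derivative_diff[OF has_vector_derivative_at_within[OF Vd[OF rt]] evs_deriv])
      define x where "x = r - t"
      have x1: "\<bar>x\<bar> \<le> 1" and xh: "\<bar>x\<bar> \<le> \<bar>h\<bar>" and xd: "\<bar>x\<bar> \<le> \<delta>/2" using rx h1 hd by (auto simp: x_def)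
      define T where "T = evs q x Qt"
      have split: "E' r = Q r ** E r + ((Q r - T) ** evs q x Vl + evs q x Hh)"
      proof -
        have "T ** evs q x Vl = evs q x (dF Vl) + evs q x Hh"
          using hH[of x] unfolding T_def q_def evs_mulF by (simp add: algebra_simps)
        then show ?thesis
          by (simp add: E'_def E_def x_def mm_diff_l mm_diff_r algebra_simps)
      qed
      have n1: "norm (Q r ** E r) \<le> L * norm (E r)"
      proof -
        have "norm (Q r ** E r) \<le> cN * (norm (Q r) * norm (E r))" unfolding cN_def by (rule norm_mm)
        also have "\<dots> \<le> cN * (M * norm (E r))"
          using M(2)[OF xd[unfolded x_def]] cN by (intro mult_left_mono mult_right_mono) auto
        finally show ?thesis by (simp add: L_def)
      qed
      have QT: "norm (Q r - T) \<le> \<bar>C7\<bar> * \<bar>x\<bar> ^ 7"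
      proof -
        have "Q r - T = hderiv 0 Q (t + x) - (\<Sum>k<7. (x ^ k / fact k) *\<^sub>R hderiv k Q t)"
          by (simp add: T_def q_def hQt x_def)
        then have "norm (Q r - T) \<le> C7 * \<bar>x\<bar> ^ 7" using C7[OF xd] by simp
        also have "\<dots> \<le> \<bar>C7\<bar> * \<bar>x\<bar> ^ 7" by (rule mult_right_mono) auto
        finally show ?thesis .
      qed
      have p76: "\<bar>x\<bar> ^ 7 \<le> \<bar>h\<bar> ^ 6"
      proof -
        have "\<bar>x\<bar> ^ 7 \<le> \<bar>x\<bar> ^ 6" using power_decreasing[of 6 7 "\<bar>x\<bar>"] x1 by simp
        also have "\<dots> \<le> \<bar>h\<bar> ^ 6" using xh by (intro power_mono) auto
        finally show ?thesis .
      qed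
      have p66: "\<bar>x\<bar> ^ 6 \<le> \<bar>h\<bar> ^ 6" using xh by (intro power_mono) auto
      have n2: "norm ((Q r - T) ** evs q x Vl) \<le> cN * \<bar>C7\<bar> * bnd q Vl * \<bar>h\<bar> ^ 6"
      proof -
        have "norm ((Q r - T) ** evs q x Vl) \<le> cN * (norm (Q r - T) * norm (evs q x Vl))"
          unfolding cN_def by (rule norm_mm)
        also have "\<dots> \<le> cN * ((\<bar>C7\<bar> * \<bar>h\<bar> ^ 6) * bnd q Vl)"
        proof -
          have "norm (Q r - T) \<le> \<bar>C7\<bar> * \<bar>h\<bar> ^ 6"
            using QT mult_left_mono[OF p76 abs_ge_zero[of C7]] by linarith
          then show ?thesis
            using evs_bound[OF x1, of q Vl] cN by (intro mult_left_mono mult_mono) auto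
        qed
        finally show ?thesis by (simp add: algebra_simps)
      qed
      have n3: "norm (evs q x Hh) \<le> bnd q Hh * \<bar>h\<bar> ^ 6"
      proof -
        have "norm (evs q x Hh) \<le> bnd q Hh * \<bar>x\<bar> ^ 6" using evs_bound_high[OF x1 hHh] .
        also have "\<dots> \<le> bnd q Hh * \<bar>h\<bar> ^ 6" using p66 bnd_nonneg by (rule mult_left_mono)
        finally show ?thesis .
      qed
      have "norm (E' r) \<le> norm (Q r ** E r) + (norm ((Q r - T) ** evs q x Vl) + norm (evs q x Hh))"
        unfolding split by (meson norm_triangle_ineq order_trans add_left_mono)
      also have "\<dots> \<le> L * norm (E r) + K0 * \<bar>h\<bar> ^ 6"
        using n1 n2 n3 by (simp add: K0_def algebra_simps)
      finally show "norm (E' r) \<le> L * norm (E r) + K0 * \<bar>h\<bar> ^ 6" .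
    next
      show "0 \<le> L" by fact
      show "0 \<le> K0 * \<bar>h\<bar> ^ 6" using K0 by simp
      show "\<bar>t + h - t\<bar> * L \<le> 1/2" using hL by simp
      show "E t = 0" by (simp add: E_def V0 hV0[folded q_def])
    qed
    then have "norm (V (t + h) - evs q h Vl) \<le> 2 * (K0 * \<bar>h\<bar> ^ 6) * \<bar>h\<bar>"
      by (simp add: E_def)
    also have "\<dots> = (2 * K0) * (\<bar>h\<bar> ^ 6 * \<bar>h\<bar>)" by (simp add: algebra_simps)
    also have "\<bar>h\<bar> ^ 6 * \<bar>h\<bar> = \<bar>h\<bar> ^ 7" by (simp add: numeral_eq_Suc)
    finally show "norm (V (t + h) - evs q h Vl) \<le> (2 * K0) * \<bar>h\<bar> ^ 7" .
  qed
qed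


definition Qt :: "fterm list" where "Qt = concat (map qtl [0..<7])"

lemma evs_qtl: "evs q x (concat (map qtl [0..<n])) = (\<Sum>k<n. (x ^ k / fact k) *\<^sub>R q k)"
  by (induct n) (simp_all add: evs_append qtl_def evs_Cons evt_def)

lemma evs_Qt: "evs q x Qt = (\<Sum>k<7. (x ^ k / fact k) *\<^sub>R q k)"
  unfolding Qt_def by (rule evs_qtl)

lemma Vl0: "evs q 0 Vl = mat 1"
  unfolding Vl_def by (simp add: evs_Cons evt_def)

lemma Fml0: "evs q 0 (Fml a2 a3 a4 a5 a6 k1 k2 k3 k4 k5) = mat 1"
  unfolding Fml_def by (simp add: evs_Cons evt_def)

lemma H_check:
  "list_all (\<lambda>t. fst t = 0) (nrm (filter (\<lambda>t. fst (snd t) \<le> 5) (mulF Qt Vl @ negF (dF Vl))))"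
  unfolding Qt_def Vl_def
  by (simp add: mulF_def negF_def dF_def qtl_def upt_rec)

lemma G_check:
  assumes "k1 = a2 - 2 * a3 - 1/12" "k2 = (1/24) * (k1 + 1/30)" "k3 = k1 / 8"
    "k4 = - (1/12) * (k1 - 1/60)"
    "k5 = 1/120 - a2/4 + a3/2 + 2 * a2^2 - 10 * a2 * a3 + 12 * a3^2 + a4 - 2 * a5"
  shows "list_all (\<lambda>t. fst t = 0) (nrm (filter (\<lambda>t. odd (fst (snd t))) (mulT 6 (Fml a2 a3 a4 a5 a6 k1 k2 k3 k4 k5) Apl)))"
  unfolding Fml_def Apl_def
  apply (simp add: mulT_def)
  apply (simp add: assms field_simps power2_eq_square)
  done


theorem mainTheorem1:
  fixes Q :: "real \<Rightarrow> 'n::finite cmat"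
    and U :: "real \<Rightarrow> real \<Rightarrow> 'n cmat"
    and t \<delta> a2 a3 a4 a5 a6 :: real
  assumes anal: "analytic_near Q t \<delta>"
    and U_ode: "\<And>s s0. \<bar>s - t\<bar> < \<delta> \<Longrightarrow> \<bar>s0 - t\<bar> < \<delta> \<Longrightarrow>
                 ((\<lambda>r. U r s0) has_vector_derivative (Q s ** U s s0)) (at s)"
    and U_init: "\<And>s0. \<bar>s0 - t\<bar> < \<delta> \<Longrightarrow> U s0 s0 = mat 1"
  defines "k1 \<equiv> a2 - 2 * a3 - 1/12"
  defines "k2 \<equiv> (1/24) * (k1 + 1/30)"
    and "k3 \<equiv> k1 / 8"
    and "k4 \<equiv> - (1/12) * (k1 - 1/60)"
    and "k5 \<equiv> 1/120 - a2/4 + a3/2 + 2 * a2^2 - 10 * a2 * a3 + 12 * a3^2 + a4 - 2 * a5"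
    and "Q0 \<equiv> Q t"
    and "Q1 \<equiv> hderiv 1 Q t"
    and "Q2 \<equiv> hderiv 2 Q t"
    and "Q3 \<equiv> hderiv 3 Q t"
    and "Q4 \<equiv> hderiv 4 Q t"
  defines "Z1 \<equiv> Q0"
    and "Z3 \<equiv> (1/24) *\<^sub>R Q2 + (1/12) *\<^sub>R comm Q1 Q0 + k1 *\<^sub>R mpow Q0 3"
    and "Z5 \<equiv> (1/1920) *\<^sub>R Q4 + (1/480) *\<^sub>R comm Q3 Q0 + (1/480) *\<^sub>R comm Q1 Q2
              + (1/240) *\<^sub>R comm (comm Q0 Q1) Q1 + k2 *\<^sub>R comm (comm Q2 Q0) Q0
              + k3 *\<^sub>R (Q0 ** Q2 ** Q0) + k4 *\<^sub>R comm (mpow Q0 3) Q1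
              + (1/240) *\<^sub>R comm (Q0 ** Q1 ** Q0) Q0 + k5 *\<^sub>R mpow Q0 5"
  defines "Z \<equiv> (\<lambda>\<tau>::real. \<tau> *\<^sub>R Z1 + (\<tau>^3) *\<^sub>R Z3 + (\<tau>^5) *\<^sub>R Z5)"
  shows "(\<lambda>\<tau>. norm (U (t + \<tau>/2) (t - \<tau>/2) - Tcay a2 a3 a4 a5 a6 (Z \<tau>)))
           \<in> O[at_right 0](\<lambda>\<tau>. \<tau> ^ 7)"
  proof -
  note defs = assms(4-17)
  define q where "q = (\<lambda>i. hderiv i Q t)"
  define cN where "cN = real CARD('n) ^ 3"
  have cN1: "1 \<le> cN" by (simp add: cN_def)
  from anal have dpos: "0 < \<delta>"
    and der: "\<And>k s. \<bar>s - t\<bar> < \<delta> \<Longrightarrow> (hderiv k Q has_vector_derivative hderiv (Suc k) Q s) (at s)"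
    unfolding analytic_near_def by auto
  obtain M where M: "0 \<le> M" "\<And>r. \<bar>r - t\<bar> \<le> \<delta>/2 \<Longrightarrow> norm (Q r) \<le> M"
    using cont_bound[of t \<delta> Q "hderiv 1 Q"] der[of _ 0] dpos by auto
  have Zev: "Z x = evs q x (Zl k1 k2 k3 k4 k5)" for x
  proof -
    have "Z x = evs q x (ZF k1 k2 k3 k4 k5)"
      unfolding assms(9-17) ZF_def Z3F_def Z5F_def
      by (simp add: q_def evs_nrm evs_append evs_tpF evs_scF evs_letF evs_commF evs_mulF evs_mpowF add.assoc del: mpowF_numeral)
    then show ?thesis by (simp add: Zl_eq)
  qed
  have Zodd: "Z (- x) = - Z x" for x
    unfolding assms(17) by simp
  have mpow_num: "mpow A (numeral n) = A ** mpow A (pred_numeral n)" for A :: "'n cmat" and n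
    by (simp add: numeral_eq_Suc)
  have aZ: "approx q Z (Zl k1 k2 k3 k4 k5)"
    by (rule approx_cong[OF approx_exact]) (simp_all add: Zev)
  have aP1: "approx q (\<lambda>x. mpow (Z x) 1) (Zl k1 k2 k3 k4 k5)"
    by (rule approx_cong[OF aZ]) simp_all
  have aP2: "approx q (\<lambda>x. mpow (Z x) 2) (Z2l k1 k2 k3 k4 k5)"
    by (rule approx_cong[OF approx_nrm[OF approx_mul[OF aZ aP1]]]) (simp_all add: Z2l_eq mpow_num)
  have aP3: "approx q (\<lambda>x. mpow (Z x) 3) (Z3l k1 k2 k3 k4 k5)"
    by (rule approx_cong[OF approx_nrm[OF approx_mul[OF aZ aP2]]]) (simp_all add: Z3l_eq mpow_num)
  have aP4: "approx q (\<lambda>x. mpow (Z x) 4) (Z4l k1 k2 k3 k4 k5)"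
    by (rule approx_cong[OF approx_nrm[OF approx_mul[OF aZ aP3]]]) (simp_all add: Z4l_eq mpow_num)
  have aP5: "approx q (\<lambda>x. mpow (Z x) 5) (Z5l k1 k2 k3 k4 k5)"
    by (rule approx_cong[OF approx_nrm[OF approx_mul[OF aZ aP4]]]) (simp_all add: Z5l_eq mpow_num)
  have aP6: "approx q (\<lambda>x. mpow (Z x) 6) (Z6l k1 k2 k3 k4 k5)"
    by (rule approx_cong[OF approx_nrm[OF approx_mul[OF aZ aP5]]]) (simp_all add: Z6l_eq mpow_num)
  have aOne: "approx q (\<lambda>x. mat 1) oneF"
    by (rule approx_cong[OF approx_exact[of q oneF]]) (simp_all add: evs_oneF)
  have aF: "approx q (\<lambda>x. Fpoly a2 a3 a4 a5 a6 (- Z x)) (Fml a2 a3 a4 a5 a6 k1 k2 k3 k4 k5)"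
  proof (rule approx_cong[OF approx_add[OF approx_add[OF approx_add[OF approx_add[OF approx_add[OF
          approx_add[OF aOne approx_sc[OF aP1, of "-1/2"]] approx_sc[OF aP2, of a2]]
          approx_sc[OF aP3, of "-a3"]] approx_sc[OF aP4, of a4]] approx_sc[OF aP5, of "-a5"]]
          approx_sc[OF aP6, of a6]]])
  qed (simp_all add: Fml_eq[symmetric] evs_nrm evs_append add.assoc Fpoly_def mpow_neg)
  have hH: "evs q x (mulF Qt Vl) - evs q x (dF Vl)
      = evs q x (filter (\<lambda>tm. \<not> fst (snd tm) \<le> 5) (mulF Qt Vl @ negF (dF Vl)))" for x
  proof -
    have "evs q x (filter (\<lambda>tm. fst (snd tm) \<le> 5) (mulF Qt Vl @ negF (dF Vl))) = 0"
      by (rule evs_zeroI[OF H_check])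
    then show ?thesis
      using evs_filter_split[of q x "mulF Qt Vl @ negF (dF Vl)" "\<lambda>tm. fst (snd tm) \<le> 5"]
      by (simp add: evs_append evs_negF)
  qed
  have aV: "approx q (\<lambda>h. U (t + h) t) Vl"
    unfolding q_def
  proof (rule V_approx[OF anal])
    show "\<And>s. \<bar>s - t\<bar> < \<delta> \<Longrightarrow> ((\<lambda>r. U r t) has_vector_derivative Q s ** U s t) (at s)"
      using U_ode dpos by simp
    show "U t t = mat 1" using U_init dpos by simp
    show "\<And>x. evs (\<lambda>i. hderiv i Q t) x Qt = (\<Sum>k<7. (x ^ k / fact k) *\<^sub>R hderiv k Q t)"
      by (rule evs_Qt)
    show "evs (\<lambda>i. hderiv i Q t) 0 Vl = mat 1" by (rule Vl0)
    show "\<And>x. evs (\<lambda>i. hderiv i Q t) x (mulF Qt Vl) - evs (\<lambda>i. hderiv i Q t) x (dF Vl) =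
        evs (\<lambda>i. hderiv i Q t) x (filter (\<lambda>tm. \<not> fst (snd tm) \<le> 5) (mulF Qt Vl @ negF (dF Vl)))"
      using hH unfolding q_def .
    show "\<forall>tm\<in>set (filter (\<lambda>tm. \<not> fst (snd tm) \<le> 5) (mulF Qt Vl @ negF (dF Vl))). 6 \<le> fst (snd tm)"
      by auto
  qed
  have aA: "approx q (\<lambda>x. U (t + x / 2) t) Apl"
    by (rule approx_cong[OF approx_nrm[OF approx_scale_arg[OF aV, of "1/2"]]]) (simp_all add: Apl_eq)
  have aB: "approx q (\<lambda>x. U (t + (-1/2) * x) t) (sbF (-1/2) Vl)"
    by (rule approx_scale_arg[OF aV]) simp
  have aH: "approx q (\<lambda>x. Fpoly a2 a3 a4 a5 a6 (- Z x) ** U (t + x / 2) t)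
      (mulT 6 (Fml a2 a3 a4 a5 a6 k1 k2 k3 k4 k5) Apl)"
    by (rule approx_mul[OF aF aA])
  define Hl where "Hl = mulT 6 (Fml a2 a3 a4 a5 a6 k1 k2 k3 k4 k5) Apl"
  obtain CH eH where CH: "0 < eH" "\<And>x. \<bar>x\<bar> < eH \<Longrightarrow>
      norm (Fpoly a2 a3 a4 a5 a6 (- Z x) ** U (t + x / 2) t - evs q x Hl) \<le> CH * \<bar>x\<bar> ^ 7"
    using aH unfolding approx_def Hl_def by blast
  have Hsym: "evs q x Hl - evs q (- x) Hl = 0" for x
  proof -
    have "evs q y (filter (\<lambda>tm. odd (fst (snd tm))) Hl) = 0" for y
      unfolding Hl_def by (rule evs_zeroI[OF G_check[OF defs(1-5)[THEN meta_eq_to_obj_eq]]])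
    then show ?thesis using evs_even_odd[of q x Hl] by simp
  qed
  have Gb: "norm (Fpoly a2 a3 a4 a5 a6 (- Z x) ** U (t + x / 2) t - Fpoly a2 a3 a4 a5 a6 (Z x) ** U (t - x / 2) t)
      \<le> 2 * CH * \<bar>x\<bar> ^ 7" if x: "\<bar>x\<bar> < eH" for x
  proof -
    define H where "H y = Fpoly a2 a3 a4 a5 a6 (- Z y) ** U (t + y / 2) t" for y
    have Hm: "H (- x) = Fpoly a2 a3 a4 a5 a6 (Z x) ** U (t - x / 2) t"
      by (simp add: H_def Zodd)
    have eq: "H x - H (- x) = (H x - evs q x Hl) - (H (- x) - evs q (- x) Hl)"
      using Hsym[of x] by (simp add: algebra_simps)
    have "norm (H x - H (- x)) \<le> norm (H x - evs q x Hl) + norm (H (- x) - evs q (- x) Hl)"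
      unfolding eq by (rule norm_triangle_ineq4)
    also have "\<dots> \<le> CH * \<bar>x\<bar> ^ 7 + CH * \<bar>- x\<bar> ^ 7"
      using CH(2)[of x] CH(2)[of "- x"] x unfolding H_def by (intro add_mono) auto
    finally show ?thesis using Hm unfolding H_def by simp
  qed
  have eps: "0 < 1 / (2 * cN)" using cN1 by simp
  obtain d1 where d1: "0 < d1" "\<And>x. \<bar>x\<bar> < d1 \<Longrightarrow> norm (Fpoly a2 a3 a4 a5 a6 (- Z x) - mat 1) < 1 / (2 * cN)"
    using approx_near[OF aF Fml0 eps] by blast
  have B0: "evs q 0 (sbF (-1/2) Vl) = mat 1"
  proof -
    have "evs q 0 (sbF (-1/2) Vl) = evs q (-1/2 * 0) Vl" by (rule evs_sbF[symmetric])
    also have "\<dots> = mat 1" using Vl0[of q] by simp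
    finally show ?thesis .
  qed
  obtain d2 where d2: "0 < d2" "\<And>x. \<bar>x\<bar> < d2 \<Longrightarrow> norm (U (t + (-1/2) * x) t - mat 1) < 1 / (2 * cN)"
    using approx_near[OF aB B0 eps] by blast
  define d3 where "d3 = min \<delta> (1 / (2 * (cN * M + 1)))"
  have cM: "0 \<le> cN * M" using M(1) cN1 by simp
  have d3: "0 < d3" using dpos cM by (simp add: d3_def add_pos_nonneg)
  define e where "e = min (min eH d1) (min d2 d3)"
  have epos: "0 < e" using CH(1) d1(1) d2(1) d3 by (simp add: e_def)
  have main: "norm (U (t + x/2) (t - x/2) - Tcay a2 a3 a4 a5 a6 (Z x)) \<le> (8 * CH) * x ^ 7"
    if x: "0 < x" "x < e" for x
  proof -
    define D where "D = Fpoly a2 a3 a4 a5 a6 (- Z x)"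
    define C where "C = Fpoly a2 a3 a4 a5 a6 (Z x)"
    define A where "A = U (t + x / 2) t"
    define B where "B = U (t - x / 2) t"
    define W where "W = U (t + x/2) (t - x/2)"
    define T where "T = Tcay a2 a3 a4 a5 a6 (Z x)"
    have ax: "\<bar>x\<bar> < eH" "\<bar>x\<bar> < d1" "\<bar>x\<bar> < d2" "x < d3" using x by (auto simp: e_def)
    have Dn: "cN * norm (D - mat 1) \<le> 1/2"
    proof -
      have "norm (D - mat 1) \<le> 1 / (2 * cN)" using d1(2)[OF ax(2)] unfolding D_def by simp
      then have "cN * norm (D - mat 1) \<le> cN * (1 / (2 * cN))" using cN1 by (intro mult_left_mono) auto
      then show ?thesis using cN1 by simp
    qed
    have Bn: "cN * norm (B - mat 1) \<le> 1/2"
    proof -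
      have "norm (B - mat 1) \<le> 1 / (2 * cN)" using d2(2)[OF ax(3)] unfolding B_def by simp
      then have "cN * norm (B - mat 1) \<le> cN * (1 / (2 * cN))" using cN1 by (intro mult_left_mono) auto
      then show ?thesis using cN1 by simp
    qed
    have inv: "D ** matrix_inv D = mat 1" using inv_ok[OF Dn[unfolded cN_def]] by blast
    have DC: "D ** C = C ** D" unfolding D_def C_def by (rule Fpoly_neg_comm)
    have DT: "D ** T = C"
    proof -
      have "D ** T = (D ** C) ** matrix_inv D" by (simp add: T_def Tcay_def C_def D_def matrix_mul_assoc)
      also have "\<dots> = C ** (D ** matrix_inv D)" by (simp add: DC matrix_mul_assoc)
      finally show ?thesis by (simp add: inv)
    qed
    have WB: "W ** B = A"
    proof -
      have "U (t + x/2) (t - x/2) ** U (t - x/2) t = U (t + x/2) t"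
      proof (rule semigroup[OF U_ode U_init M(2) M(1) dpos])
        show "\<bar>t - x / 2 - t\<bar> \<le> \<delta> / 2" "\<bar>t + x / 2 - t\<bar> \<le> \<delta> / 2"
          using ax(4) x(1) by (auto simp: d3_def)
        have "x < 1 / (2 * (cN * M + 1))" using ax(4) by (simp add: d3_def)
        moreover have "0 < 2 * (cN * M + 1)" using cM by simp
        ultimately have "x * (2 * (cN * M + 1)) < 1" by (simp add: pos_less_divide_eq)
        then show "\<bar>t + x / 2 - (t - x / 2)\<bar> * (real CARD('n) ^ 3 * M) \<le> 1 / 2"
          using x(1) M(1) cN1 unfolding cN_def[symmetric] by (simp add: algebra_simps)
      qed
      then show ?thesis by (simp add: W_def A_def B_def)
    qed
    have key: "(D ** (W - T)) ** B = D ** A - C ** B"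
      by (simp add: mm_diff_l mm_diff_r DT WB flip: matrix_mul_assoc)
    have "norm (W - T) \<le> 2 * norm (D ** (W - T))" using mm_lower(1)[OF Dn[unfolded cN_def]] .
    also have "\<dots> \<le> 2 * (2 * norm ((D ** (W - T)) ** B))"
      using mm_lower(2)[OF Bn[unfolded cN_def], of "D ** (W - T)"] by simp
    also have "\<dots> = 4 * norm (D ** A - C ** B)" by (simp add: key)
    also have "\<dots> \<le> 4 * (2 * CH * \<bar>x\<bar> ^ 7)"
      using Gb[OF ax(1)] unfolding D_def A_def C_def B_def by simp
    finally show ?thesis using x(1) by (simp add: W_def T_def)
  qed
  show ?thesis
  proof (rule bigoI[where c = "8 * CH"])
    show "\<forall>\<^sub>F x in at_right 0. norm (norm (U (t + x / 2) (t - x / 2) - Tcay a2 a3 a4 a5 a6 (Z x)))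
        \<le> 8 * CH * norm (x ^ 7)"
      unfolding eventually_at_right_field
    proof (intro exI conjI allI impI)
      show "0 < e" by fact
      fix x :: real assume "0 < x" "x < e"
      then show "norm (norm (U (t + x / 2) (t - x / 2) - Tcay a2 a3 a4 a5 a6 (Z x))) \<le> 8 * CH * norm (x ^ 7)"
        using main[of x] by simp
    qed
  qed
qed

end
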